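(* Let $M$ be a monoidal category and $C$ an $M$-actegory, and let $l\in\mathit{Optic}_{C,C}((x,x),(y,y))$ with corresponding 2-cell $\theta_l:R_x\otimes L_x\Rightarrow R_y\otimes L_y$. The following are equivalent: (i) $\theta_l;\varepsilon_y=\varepsilon_x$ as 2-cells $R_x\otimes L_x\Rightarrow C(-,=)$, and the composite $R_x\otimes L_x\xrightarrow{\theta_l}R_y\otimes L_y\cong R_y\otimes M(-,=)\otimes L_y\xrightarrow{R_y\otimes\eta_y\otimes L_y}R_y\otimes L_y\otimes R_y\otimes L_y$ equals the composite $R_x\otimes L_x\cong R_x\otimes M(-,=)\otimes L_x\xrightarrow{R_x\otimes\eta_x\otimes L_x}R_x\otimes L_x\otimes R_x\otimes L_x\xrightarrow{\theta_l\otimes\theta_l}R_y\otimes L_y\otimes R_y\otimes L_y$; (ii) $\mathrm{outside}(l)=\mathrm{id}_x$ and $\mathrm{once}(l)=\mathrm{twice}(l)$, where, for $l=\langle\alpha\mid\beta\rangle_m$, $\mathrm{outside}(l)=\alpha;\beta\in C(x,x)$, $\mathrm{once}(l)=\langle\alpha\mid\mathrm{id}_{m\odot y}\mid\beta\rangle_{m,m}$ and $\mathrm{twice}(l)=\langle\alpha\mid\beta;\alpha\mid\beta\rangle_{m,m}$ in $\mathit{Optic}^2(x,y)$.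
   Context: $(M,\otimes,I,\lambda,a)$ is a monoidal category; an $M$-actegory is a category $C$ with a functor $\odot:M\times C\to C$ and coherent natural isomorphisms $\lambda_x:I\odot x\to x$, $a_{m,n,x}:(m\otimes n)\odot x\to m\odot(n\odot x)$; $M$ is an $M$-actegory via $\otimes$. Composition is diagrammatic ($f;g$ = $f$ then $g$). $\mathit{Optic}_{C,C}((x,u),(y,v))=\int^{m\in M}C(x,m\odot y)\times C(m\odot v,u)$, elements $\langle\alpha\mid\beta\rangle_m$ modulo $\langle\alpha;(f\odot y)\mid\beta\rangle_m=\langle\alpha\mid(f\odot v);\beta\rangle_n$ for $f:n\to m$. $\mathit{Optic}^2(x,y)=\int^{m_1,m_2\in M}C(x,m_1\odot y)\times C(m_1\odot y,m_2\odot y)\times C(m_2\odot y,x)$, elements written $\langle\alpha\mid\gamma\mid\beta\rangle_{m_1,m_2}$ (quotiented by the coend relations in $m_1$ and $m_2$). $\mathrm{outside}$, $\mathrm{once}$, $\mathrm{twice}$ are well defined on equivalence classes. $\mathit{Tamb}$: the bicategory of $M$-actegories whose hom-category $\mathit{Tamb}_{C,D}$ consists of functors $C^{op}\times D\to\mathrm{Set}$ with compatible strengths $P(c,d)\to P(m\odot c,m\odot d)$ and strength-preserving natural transformations (2-cells); identities are hom-profunctors; composition $(P\otimes Q)(c,e)=\int^d P(c,d)\times Q(d,e)$. For $x\in C$: $R_x\in\mathit{Tamb}_{C,M}$ is $(c,n)\mapsto C(c,n\odot x)$, $L_x\in\mathit{Tamb}_{M,C}$ is $(n,c)\mapsto C(n\odot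 x,c)$ (strengths induced by the action and associator). $\varepsilon_x:R_x\otimes L_x\Rightarrow C(-,=)$ is composition $\int^nC(c,n\odot x)\times C(n\odot x,c')\to C(c,c')$; $\eta_x:M(-,=)\Rightarrow L_x\otimes R_x$ sends $h:k\to k'$ to $h\odot x\in C(k\odot x,k'\odot x)\cong(L_x\otimes R_x)(k,k')$. An optic $l:(x,x)\to(y,y)$ corresponds to the unique 2-cell $\theta_l:R_x\otimes L_x\Rightarrow R_y\otimes L_y$ whose $(x,x)$-component sends the identity optic $\langle\lambda^{-1}_x\mid\lambda_x\rangle_I\in(R_x\otimes L_x)(x,x)$ to $l$. Bicategorical associators/unitors are suppressed. *)

theory Defs
  imports Main
begin

section \<open>Categories (composition is diagrammatic: ccomp C f g = f;g)\<close>

record ('o,'a) cat =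
  cOb :: "'o set"
  cAr :: "'a set"
  cdom :: "'a \<Rightarrow> 'o"
  ccod :: "'a \<Rightarrow> 'o"
  cid :: "'o \<Rightarrow> 'a"
  ccomp :: "'a \<Rightarrow> 'a \<Rightarrow> 'a"

definition hom :: "('o,'a) cat \<Rightarrow> 'o \<Rightarrow> 'o \<Rightarrow> 'a set" where
  "hom C a b = {f \<in> cAr C. cdom C f = a \<and> ccod C f = b}"

definition category :: "('o,'a) cat \<Rightarrow> bool" where
  "category C \<longleftrightarrow>
     (\<forall>f\<in>cAr C. cdom C f \<in> cOb C \<and> ccod C f \<in> cOb C) \<and>
     (\<forall>a\<in>cOb C. cid C a \<in> hom C a a) \<and>
     (\<forall>a b c f g. f \<in> hom C a b \<longrightarrow> g \<in> hom C b c \<longrightarrow> ccomp C f g \<in> hom C a c) \<and>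
     (\<forall>a b f. f \<in> hom C a b \<longrightarrow> ccomp C (cid C a) f = f \<and> ccomp C f (cid C b) = f) \<and>
     (\<forall>a b c d f g h. f \<in> hom C a b \<longrightarrow> g \<in> hom C b c \<longrightarrow> h \<in> hom C c d \<longrightarrow>
        ccomp C (ccomp C f g) h = ccomp C f (ccomp C g h))"

definition is_iso :: "('o,'a) cat \<Rightarrow> 'a \<Rightarrow> 'o \<Rightarrow> 'o \<Rightarrow> bool" where
  "is_iso C f a b \<longleftrightarrow> f \<in> hom C a b \<and>
     (\<exists>g\<in>hom C b a. ccomp C f g = cid C a \<and> ccomp C g f = cid C b)"

definition cinv :: "('o,'a) cat \<Rightarrow> 'a \<Rightarrow> 'a" where
  "cinv C f = (SOME g. g \<in> hom C (ccod C f) (cdom C f) \<and>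
      ccomp C f g = cid C (cdom C f) \<and> ccomp C g f = cid C (ccod C f))"

definition bifunctor :: "('o1,'a1) cat \<Rightarrow> ('o2,'a2) cat \<Rightarrow> ('o3,'a3) cat \<Rightarrow>
    ('o1 \<Rightarrow> 'o2 \<Rightarrow> 'o3) \<Rightarrow> ('a1 \<Rightarrow> 'a2 \<Rightarrow> 'a3) \<Rightarrow> bool" where
  "bifunctor A B D FO FA \<longleftrightarrow>
     (\<forall>a\<in>cOb A. \<forall>b\<in>cOb B. FO a b \<in> cOb D) \<and>
     (\<forall>a a' b b' f g. f \<in> hom A a a' \<longrightarrow> g \<in> hom B b b' \<longrightarrow> FA f g \<in> hom D (FO a b) (FO a' b')) \<and>
     (\<forall>a\<in>cOb A. \<forall>b\<in>cOb B. FA (cid A a) (cid B b) = cid D (FO a b)) \<and>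
     (\<forall>a a' a'' b b' b'' f f' g g'. f \<in> hom A a a' \<longrightarrow> f' \<in> hom A a' a'' \<longrightarrow>
        g \<in> hom B b b' \<longrightarrow> g' \<in> hom B b' b'' \<longrightarrow>
        FA (ccomp A f f') (ccomp B g g') = ccomp D (FA f g) (FA f' g'))"

record ('mo,'m,'o,'a) actg =
  Mcat :: "('mo,'m) cat"
  tenO :: "'mo \<Rightarrow> 'mo \<Rightarrow> 'mo"
  tenA :: "'m \<Rightarrow> 'm \<Rightarrow> 'm"
  munit :: "'mo"
  mlam :: "'mo \<Rightarrow> 'm"
  mrho :: "'mo \<Rightarrow> 'm"
  mass :: "'mo \<Rightarrow> 'mo \<Rightarrow> 'mo \<Rightarrow> 'm" \<comment> \<open>(m \<otimes> n) \<otimes> p \<rightarrow> m \<otimes> (n \<otimes> p)\<close>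
  Ccat :: "('o,'a) cat"
  actO :: "'mo \<Rightarrow> 'o \<Rightarrow> 'o"
  actA :: "'m \<Rightarrow> 'a \<Rightarrow> 'a"
  alam :: "'o \<Rightarrow> 'a"
  aass :: "'mo \<Rightarrow> 'mo \<Rightarrow> 'o \<Rightarrow> 'a" \<comment> \<open>a_{m,n,x} : (m \<otimes> n) \<odot> x \<rightarrow> m \<odot> (n \<odot> x)\<close>

definition monoidal :: "('mo,'m,'o,'a) actg \<Rightarrow> bool" where
  "monoidal A \<longleftrightarrow> (let M = Mcat A; t = tenO A; T = tenA A; I = munit A in
     category M \<and> bifunctor M M M t T \<and> I \<in> cOb M \<and>
     (\<forall>m\<in>cOb M. is_iso M (mlam A m) (t I m) m \<and> is_iso M (mrho A m) (t m I) m) \<and>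
     (\<forall>m\<in>cOb M. \<forall>n\<in>cOb M. \<forall>p\<in>cOb M.
        is_iso M (mass A m n p) (t (t m n) p) (t m (t n p))) \<and>
     (\<forall>a b f. f \<in> hom M a b \<longrightarrow>
        ccomp M (T (cid M I) f) (mlam A b) = ccomp M (mlam A a) f \<and>
        ccomp M (T f (cid M I)) (mrho A b) = ccomp M (mrho A a) f) \<and>
     (\<forall>a a' b b' c c' f g h. f \<in> hom M a a' \<longrightarrow> g \<in> hom M b b' \<longrightarrow> h \<in> hom M c c' \<longrightarrow>
        ccomp M (T (T f g) h) (mass A a' b' c') = ccomp M (mass A a b c) (T f (T g h))) \<and>
     (\<forall>m\<in>cOb M. \<forall>n\<in>cOb M. \<forall>p\<in>cOb M. \<forall>q\<in>cOb M.
        ccomp M (mass A (t m n) p q) (mass A m n (t p q)) =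
        ccomp M (ccomp M (T (mass A m n p) (cid M q)) (mass A m (t n p) q))
                (T (cid M m) (mass A n p q))) \<and>
     (\<forall>m\<in>cOb M. \<forall>n\<in>cOb M.
        ccomp M (mass A m I n) (T (cid M m) (mlam A n)) = T (mrho A m) (cid M n)))"

definition actegory :: "('mo,'m,'o,'a) actg \<Rightarrow> bool" where
  "actegory A \<longleftrightarrow> monoidal A \<and> (let M = Mcat A; C = Ccat A; t = tenO A; T = tenA A;
       I = munit A; ac = actO A; AC = actA A in
     category C \<and> bifunctor M C C ac AC \<and>
     (\<forall>x\<in>cOb C. is_iso C (alam A x) (ac I x) x) \<and>
     (\<forall>m\<in>cOb M. \<forall>n\<in>cOb M. \<forall>x\<in>cOb C. is_iso C (aass A m n x) (ac (t m n) x) (ac m (ac n x))) \<and>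
     (\<forall>x y f. f \<in> hom C x y \<longrightarrow> ccomp C (AC (cid M I) f) (alam A y) = ccomp C (alam A x) f) \<and>
     (\<forall>m m' n n' x y h k f. h \<in> hom M m m' \<longrightarrow> k \<in> hom M n n' \<longrightarrow> f \<in> hom C x y \<longrightarrow>
        ccomp C (AC (T h k) f) (aass A m' n' y) = ccomp C (aass A m n x) (AC h (AC k f))) \<and>
     (\<forall>m\<in>cOb M. \<forall>n\<in>cOb M. \<forall>p\<in>cOb M. \<forall>x\<in>cOb C.
        ccomp C (aass A (t m n) p x) (aass A m n (ac p x)) =
        ccomp C (ccomp C (AC (mass A m n p) (cid C x)) (aass A m (t n p) x))
                (AC (cid M m) (aass A n p x))) \<and>
     (\<forall>m\<in>cOb M. \<forall>x\<in>cOb C.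
        ccomp C (aass A m I x) (AC (cid M m) (alam A x)) = AC (mrho A m) (cid C x)) \<and>
     (\<forall>m\<in>cOb M. \<forall>x\<in>cOb C.
        ccomp C (aass A I m x) (alam A (ac m x)) = AC (mlam A m) (cid C x)))"

section \<open>Coends as quotients of representatives\<close>

definition genrel :: "'t set \<Rightarrow> ('t \<times> 't) set \<Rightarrow> ('t \<times> 't) set" where
  "genrel R S = (let S' = S \<inter> (R \<times> R) in ((S' \<union> S'\<inverse>)\<^sup>*) \<inter> (R \<times> R))"

definition cls :: "('t \<times> 't) set \<Rightarrow> 't \<Rightarrow> 't set" where
  "cls E t = E `` {t}"

subsection \<open>Optics Optic((x,u),(y,v)) = \<integral>^m C(x, m\<odot>y) \<times> C(m\<odot>v, u)\<close>

definition opt_reps :: "('mo,'m,'o,'a) actg \<Rightarrow> 'o \<Rightarrow> 'o \<Rightarrow> 'o \<Rightarrow> 'o \<Rightarrow> ('mo \<times> 'a \<times> 'a) set" where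
  "opt_reps A x u y v = {(m,\<alpha>,\<beta>). m \<in> cOb (Mcat A) \<and> \<alpha> \<in> hom (Ccat A) x (actO A m y)
      \<and> \<beta> \<in> hom (Ccat A) (actO A m v) u}"

definition opt_step :: "('mo,'m,'o,'a) actg \<Rightarrow> 'o \<Rightarrow> 'o \<Rightarrow> 'o \<Rightarrow> 'o \<Rightarrow> (('mo \<times> 'a \<times> 'a) \<times> ('mo \<times> 'a \<times> 'a)) set" where
  "opt_step A x u y v = {((m, ccomp (Ccat A) \<alpha> (actA A h (cid (Ccat A) y)), \<beta>),
                          (n, \<alpha>, ccomp (Ccat A) (actA A h (cid (Ccat A) v)) \<beta>)) | m n h \<alpha> \<beta>.
      h \<in> hom (Mcat A) n m \<and> \<alpha> \<in> hom (Ccat A) x (actO A n y) \<and> \<beta> \<in> hom (Ccat A) (actO A m v) u}"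

definition opt_rel where
  "opt_rel A x u y v = genrel (opt_reps A x u y v) (opt_step A x u y v)"

definition Optic :: "('mo,'m,'o,'a) actg \<Rightarrow> 'o \<Rightarrow> 'o \<Rightarrow> 'o \<Rightarrow> 'o \<Rightarrow> ('mo \<times> 'a \<times> 'a) set set" where
  "Optic A x u y v = opt_reps A x u y v // opt_rel A x u y v"

text \<open>outside(<\<alpha>|\<beta>>) = \<alpha>;\<beta>  (well defined on classes); also the counit \<epsilon>.\<close>
definition outside :: "('mo,'m,'o,'a) actg \<Rightarrow> ('mo \<times> 'a \<times> 'a) set \<Rightarrow> 'a" where
  "outside A W = (case (SOME t. t \<in> W) of (m,\<alpha>,\<beta>) \<Rightarrow> ccomp (Ccat A) \<alpha> \<beta>)"

definition opt2_reps :: "('mo,'m,'o,'a) actg \<Rightarrow> 'o \<Rightarrow> 'o \<Rightarrow> ('mo \<times> 'mo \<times> 'a \<times> 'a \<times> 'a) set" where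
  "opt2_reps A x y = {(m1,m2,\<alpha>,\<gamma>,\<beta>). m1 \<in> cOb (Mcat A) \<and> m2 \<in> cOb (Mcat A) \<and>
      \<alpha> \<in> hom (Ccat A) x (actO A m1 y) \<and> \<gamma> \<in> hom (Ccat A) (actO A m1 y) (actO A m2 y) \<and>
      \<beta> \<in> hom (Ccat A) (actO A m2 y) x}"

definition opt2_step where
  "opt2_step A x y =
    {((m1, m2, ccomp (Ccat A) \<alpha> (actA A h (cid (Ccat A) y)), \<gamma>, \<beta>),
      (n1, m2, \<alpha>, ccomp (Ccat A) (actA A h (cid (Ccat A) y)) \<gamma>, \<beta>)) | m1 n1 m2 h \<alpha> \<gamma> \<beta>.
      h \<in> hom (Mcat A) n1 m1} \<union>
    {((m1, m2, \<alpha>, ccomp (Ccat A) \<gamma> (actA A h (cid (Ccat A) y)), \<beta>),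
      (m1, n2, \<alpha>, \<gamma>, ccomp (Ccat A) (actA A h (cid (Ccat A) y)) \<beta>)) | m1 m2 n2 h \<alpha> \<gamma> \<beta>.
      h \<in> hom (Mcat A) n2 m2}"

definition opt2_rel where
  "opt2_rel A x y = genrel (opt2_reps A x y) (opt2_step A x y)"

definition Optic2 where
  "Optic2 A x y = opt2_reps A x y // opt2_rel A x y"

definition once :: "('mo,'m,'o,'a) actg \<Rightarrow> 'o \<Rightarrow> 'o \<Rightarrow> ('mo \<times> 'a \<times> 'a) set \<Rightarrow> ('mo \<times> 'mo \<times> 'a \<times> 'a \<times> 'a) set" where
  "once A x y l = (\<Union>(m,\<alpha>,\<beta>)\<in>l. cls (opt2_rel A x y) (m, m, \<alpha>, cid (Ccat A) (actO A m y), \<beta>))"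

definition twice :: "('mo,'m,'o,'a) actg \<Rightarrow> 'o \<Rightarrow> 'o \<Rightarrow> ('mo \<times> 'a \<times> 'a) set \<Rightarrow> ('mo \<times> 'mo \<times> 'a \<times> 'a \<times> 'a) set" where
  "twice A x y l = (\<Union>(m,\<alpha>,\<beta>)\<in>l. cls (opt2_rel A x y) (m, m, \<alpha>, ccomp (Ccat A) \<beta> \<alpha>, \<beta>))"

definition idopt :: "('mo,'m,'o,'a) actg \<Rightarrow> 'o \<Rightarrow> ('mo \<times> 'a \<times> 'a) set" where
  "idopt A x = cls (opt_rel A x x x x) (munit A, cinv (Ccat A) (alam A x), alam A x)"

subsection \<open>The Tambara module R_x \<otimes> L_x, with (R_x \<otimes> L_x)(c,c') = Optic((c,c'),(x,x))\<close>

definition RL where "RL A x c c' = Optic A c c' x x"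

text \<open>Profunctor action (p : d \<rightarrow> c contravariantly, q : c' \<rightarrow> d').\<close>
definition rl_dimap :: "('mo,'m,'o,'a) actg \<Rightarrow> 'o \<Rightarrow> 'o \<Rightarrow> 'o \<Rightarrow> 'a \<Rightarrow> 'a \<Rightarrow> ('mo \<times> 'a \<times> 'a) set \<Rightarrow> ('mo \<times> 'a \<times> 'a) set" where
  "rl_dimap A x d d' p q W = (\<Union>(n,f,g)\<in>W. cls (opt_rel A d d' x x) (n, ccomp (Ccat A) p f, ccomp (Ccat A) g q))"

definition rl_str :: "('mo,'m,'o,'a) actg \<Rightarrow> 'o \<Rightarrow> 'mo \<Rightarrow> 'o \<Rightarrow> 'o \<Rightarrow> ('mo \<times> 'a \<times> 'a) set \<Rightarrow> ('mo \<times> 'a \<times> 'a) set" where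
  "rl_str A x m c c' W = (\<Union>(n,f,g)\<in>W. cls (opt_rel A (actO A m c) (actO A m c') x x)
      (tenO A m n, ccomp (Ccat A) (actA A (cid (Mcat A) m) f) (cinv (Ccat A) (aass A m n x)),
                   ccomp (Ccat A) (aass A m n x) (actA A (cid (Mcat A) m) g)))"

text \<open>2-cells R_x \<otimes> L_x \<Rightarrow> R_y \<otimes> L_y of Tamb_{C,C}: strength-preserving natural transformations.\<close>
definition two_cell :: "('mo,'m,'o,'a) actg \<Rightarrow> 'o \<Rightarrow> 'o \<Rightarrow>
    ('o \<Rightarrow> 'o \<Rightarrow> ('mo \<times> 'a \<times> 'a) set \<Rightarrow> ('mo \<times> 'a \<times> 'a) set) \<Rightarrow> bool" where
  "two_cell A x y \<theta> \<longleftrightarrow>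
     (\<forall>c\<in>cOb (Ccat A). \<forall>c'\<in>cOb (Ccat A). \<forall>W\<in>RL A x c c'. \<theta> c c' W \<in> RL A y c c') \<and>
     (\<forall>c c' d d' p q W. c \<in> cOb (Ccat A) \<longrightarrow> c' \<in> cOb (Ccat A) \<longrightarrow> d \<in> cOb (Ccat A) \<longrightarrow>
        d' \<in> cOb (Ccat A) \<longrightarrow> p \<in> hom (Ccat A) d c \<longrightarrow> q \<in> hom (Ccat A) c' d' \<longrightarrow> W \<in> RL A x c c' \<longrightarrow>
        \<theta> d d' (rl_dimap A x d d' p q W) = rl_dimap A y d d' p q (\<theta> c c' W)) \<and>
     (\<forall>m c c' W. m \<in> cOb (Mcat A) \<longrightarrow> c \<in> cOb (Ccat A) \<longrightarrow> c' \<in> cOb (Ccat A) \<longrightarrow> W \<in> RL A x c c' \<longrightarrow>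
        \<theta> (actO A m c) (actO A m c') (rl_str A x m c c' W) = rl_str A y m c c' (\<theta> c c' W))"

subsection \<open>R_x \<otimes> L_x \<otimes> R_x \<otimes> L_x (bicategorical associators suppressed: a flat coend
  over n1 \<in> M, d \<in> C, n2 \<in> M)\<close>

type_synonym ('mo,'a,'o) rep4 = "'mo \<times> 'a \<times> 'o \<times> 'a \<times> 'mo \<times> 'a \<times> 'a"

definition rep4 :: "('mo,'m,'o,'a) actg \<Rightarrow> 'o \<Rightarrow> 'o \<Rightarrow> 'o \<Rightarrow> ('mo,'a,'o) rep4 set" where
  "rep4 A x c c' = {(n1,f,d,g,n2,h,k). n1 \<in> cOb (Mcat A) \<and> f \<in> hom (Ccat A) c (actO A n1 x) \<and>
     d \<in> cOb (Ccat A) \<and> g \<in> hom (Ccat A) (actO A n1 x) d \<and> n2 \<in> cOb (Mcat A) \<and>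
     h \<in> hom (Ccat A) d (actO A n2 x) \<and> k \<in> hom (Ccat A) (actO A n2 x) c'}"

definition step4 :: "('mo,'m,'o,'a) actg \<Rightarrow> 'o \<Rightarrow> (('mo,'a,'o) rep4 \<times> ('mo,'a,'o) rep4) set" where
  "step4 A x =
    {((m1, ccomp (Ccat A) f (actA A u (cid (Ccat A) x)), d, g, n2, h, k),
      (n1, f, d, ccomp (Ccat A) (actA A u (cid (Ccat A) x)) g, n2, h, k)) | m1 n1 u f d g n2 h k.
       u \<in> hom (Mcat A) n1 m1} \<union>
    {((n1, f, d', ccomp (Ccat A) g p, n2, h, k),
      (n1, f, d, g, n2, ccomp (Ccat A) p h, k)) | n1 f d d' g p n2 h k.
       p \<in> hom (Ccat A) d d'} \<union>
    {((n1, f, d, g, m2, ccomp (Ccat A) h (actA A u (cid (Ccat A) x)), k),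
      (n1, f, d, g, n2, h, ccomp (Ccat A) (actA A u (cid (Ccat A) x)) k)) | n1 f d g m2 n2 u h k.
       u \<in> hom (Mcat A) n2 m2}"

definition rel4 where "rel4 A x c c' = genrel (rep4 A x c c') (step4 A x)"

definition RLRL where "RLRL A x c c' = rep4 A x c c' // rel4 A x c c'"

text \<open>R_x \<otimes> L_x \<cong> R_x \<otimes> M(-,=) \<otimes> L_x \<rightarrow> R_x \<otimes> L_x \<otimes> R_x \<otimes> L_x  via  R_x \<otimes> \<eta>_x \<otimes> L_x;
  \<eta>_x(id_n) = id_n \<odot> x \<in> C(n\<odot>x, n\<odot>x) \<cong> (L_x \<otimes> R_x)(n,n).\<close>
definition dbl :: "('mo,'m,'o,'a) actg \<Rightarrow> 'o \<Rightarrow> 'o \<Rightarrow> 'o \<Rightarrow> ('mo \<times> 'a \<times> 'a) set \<Rightarrow> ('mo,'a,'o) rep4 set" where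
  "dbl A x c c' W = (\<Union>(n,f,g)\<in>W. cls (rel4 A x c c')
      (n, f, actO A n x, actA A (cid (Mcat A) n) (cid (Ccat A) x), n, cid (Ccat A) (actO A n x), g))"

definition glue :: "('mo,'m,'o,'a) actg \<Rightarrow> 'o \<Rightarrow> 'o \<Rightarrow> 'o \<Rightarrow> 'o \<Rightarrow>
    ('mo \<times> 'a \<times> 'a) set \<Rightarrow> ('mo \<times> 'a \<times> 'a) set \<Rightarrow> ('mo,'a,'o) rep4 set" where
  "glue A y c d c' U V = (\<Union>(n1,f,g)\<in>U. \<Union>(n2,h,k)\<in>V. cls (rel4 A y c c') (n1, f, d, g, n2, h, k))"

definition hcomp2 :: "('mo,'m,'o,'a) actg \<Rightarrow> 'o \<Rightarrow> 'o \<Rightarrow>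
    ('o \<Rightarrow> 'o \<Rightarrow> ('mo \<times> 'a \<times> 'a) set \<Rightarrow> ('mo \<times> 'a \<times> 'a) set) \<Rightarrow> 'o \<Rightarrow> 'o \<Rightarrow>
    ('mo,'a,'o) rep4 set \<Rightarrow> ('mo,'a,'o) rep4 set" where
  "hcomp2 A x y \<theta> c c' W = (\<Union>(n1,f,d,g,n2,h,k)\<in>W.
      glue A y c d c' (\<theta> c d (cls (opt_rel A c d x x) (n1, f, g)))
                      (\<theta> d c' (cls (opt_rel A d c' x x) (n2, h, k))))"

end

theory Submission
  imports Defs
begin

lemma genrel_equiv: "equiv R (genrel R S)"
proof -
  let ?X = "(S \<inter> R \<times> R) \<union> (S \<inter> R \<times> R)\<inverse>"
  have sx: "sym ?X" unfolding sym_def by blast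
  have s: "sym (?X\<^sup>*)" by (rule sym_rtrancl[OF sx])
  have t: "trans (?X\<^sup>*)" by (rule trans_rtrancl)
  have g: "genrel R S = ?X\<^sup>* \<inter> R \<times> R" unfolding genrel_def Let_def by simp
  show ?thesis unfolding equiv_def g
  proof (intro conjI)
    show "?X\<^sup>* \<inter> R \<times> R \<subseteq> R \<times> R" by blast
    show "refl_on R (?X\<^sup>* \<inter> R \<times> R)" unfolding refl_on_def by blast
    show "sym (?X\<^sup>* \<inter> R \<times> R)" using s unfolding sym_def by blast
    show "trans (?X\<^sup>* \<inter> R \<times> R)" using t unfolding trans_def by blast
  qed
qed

lemma genrel_step: "a \<in> R \<Longrightarrow> b \<in> R \<Longrightarrow> (a,b) \<in> S \<Longrightarrow> (a,b) \<in> genrel R S"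
  unfolding genrel_def Let_def by blast

lemma genrel_sub:
  assumes st: "\<And>a b. a \<in> R \<Longrightarrow> b \<in> R \<Longrightarrow> (a,b) \<in> S \<Longrightarrow> (a,b) \<in> Q"
    and rf: "\<And>a. a \<in> R \<Longrightarrow> (a,a) \<in> Q" and sy: "sym Q" and tr: "trans Q"
    and ab: "(a,b) \<in> genrel R S"
  shows "(a,b) \<in> Q"
proof -
  let ?S = "S \<inter> (R \<times> R)"
  from ab have a: "a \<in> R" and r: "(a,b) \<in> (?S \<union> ?S\<inverse>)\<^sup>*" unfolding genrel_def Let_def by auto
  from r have "b \<in> R \<and> (a,b) \<in> Q"
  proof (induction rule: rtrancl_induct)
    case base then show ?case using a rf by auto
  next
    case (step b c)
    then have "c \<in> R" "(b,c) \<in> Q" using st sy unfolding sym_def by auto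
    then show ?case using step tr unfolding trans_def by blast
  qed
  then show ?thesis by blast
qed

lemma genrel_fun:
  assumes st: "\<And>a b. a \<in> R \<Longrightarrow> b \<in> R \<Longrightarrow> (a,b) \<in> S \<Longrightarrow> \<phi> a = \<phi> b"
    and ab: "(a,b) \<in> genrel R S"
  shows "\<phi> a = \<phi> b"
proof -
  have "(a,b) \<in> {(a,b). \<phi> a = \<phi> b}"
    by (rule genrel_sub[OF _ _ _ _ ab]) (auto simp: st sym_def trans_def)
  then show ?thesis by simp
qed

lemma genrel_map:
  assumes st: "\<And>a b. a \<in> R \<Longrightarrow> b \<in> R \<Longrightarrow> (a,b) \<in> S \<Longrightarrow> (\<phi> a, \<phi> b) \<in> genrel R' S'"
    and mp: "\<And>a. a \<in> R \<Longrightarrow> \<phi> a \<in> R'"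
    and ab: "(a,b) \<in> genrel R S"
  shows "(\<phi> a, \<phi> b) \<in> genrel R' S'"
proof -
  have e: "equiv R' (genrel R' S')" by (rule genrel_equiv)
  have rf: "\<And>a. a \<in> R' \<Longrightarrow> (a,a) \<in> genrel R' S'" using e unfolding equiv_def refl_on_def by blast
  have sy: "\<And>a b. (a,b) \<in> genrel R' S' \<Longrightarrow> (b,a) \<in> genrel R' S'" using e unfolding equiv_def by (meson symD)
  have tr: "\<And>a b c. (a,b) \<in> genrel R' S' \<Longrightarrow> (b,c) \<in> genrel R' S' \<Longrightarrow> (a,c) \<in> genrel R' S'"
    using e unfolding equiv_def by (meson transD)
  have "(a,b) \<in> {(a,b). (\<phi> a, \<phi> b) \<in> genrel R' S'}"
  proof (rule genrel_sub[OF _ _ _ _ ab])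
    show "\<And>a b. a \<in> R \<Longrightarrow> b \<in> R \<Longrightarrow> (a,b) \<in> S \<Longrightarrow> (a,b) \<in> {(a,b). (\<phi> a, \<phi> b) \<in> genrel R' S'}"
      using st by simp
    show "\<And>a. a \<in> R \<Longrightarrow> (a,a) \<in> {(a,b). (\<phi> a, \<phi> b) \<in> genrel R' S'}" using rf mp by simp
    show "sym {(a,b). (\<phi> a, \<phi> b) \<in> genrel R' S'}" unfolding sym_def using sy by simp
    show "trans {(a,b). (\<phi> a, \<phi> b) \<in> genrel R' S'}" unfolding trans_def using tr by blast
  qed
  then show ?thesis by simp
qed

lemma genrel_R: "(a,b) \<in> genrel R S \<Longrightarrow> a \<in> R \<and> b \<in> R"
  unfolding genrel_def Let_def by auto

lemma cls_in_quot: "t \<in> R \<Longrightarrow> cls (genrel R S) t \<in> R // genrel R S"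
  unfolding cls_def by (rule quotientI)

lemma quot_cls: "X \<in> R // genrel R S \<Longrightarrow> t \<in> X \<Longrightarrow> X = cls (genrel R S) t"
  unfolding cls_def
  apply (erule quotientE)
  apply (simp add: equiv_class_eq[OF genrel_equiv])
  done

lemma cls_self: "t \<in> R \<Longrightarrow> t \<in> cls (genrel R S) t"
  unfolding cls_def by (rule equiv_class_self[OF genrel_equiv])

lemma cls_eq: "(a,b) \<in> genrel R S \<Longrightarrow> cls (genrel R S) a = cls (genrel R S) b"
  unfolding cls_def by (rule equiv_class_eq[OF genrel_equiv])

lemma cls_eqD: "cls (genrel R S) a = cls (genrel R S) b \<Longrightarrow> a \<in> R \<Longrightarrow> b \<in> R \<Longrightarrow> (a,b) \<in> genrel R S"
  unfolding cls_def by (rule eq_equiv_class[OF _ genrel_equiv])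

lemma quot_ne: "X \<in> R // genrel R S \<Longrightarrow> \<exists>t. t \<in> X"
  apply (erule quotientE)
  apply (rule exI)
  apply (erule ssubst)
  apply (erule equiv_class_self[OF genrel_equiv])
  done

lemma quot_rel: "X \<in> R // genrel R S \<Longrightarrow> a \<in> X \<Longrightarrow> b \<in> X \<Longrightarrow> (a,b) \<in> genrel R S"
proof -
  assume X: "X \<in> R // genrel R S" and a: "a \<in> X" and b: "b \<in> X"
  from X obtain x where x: "x \<in> R" "X = genrel R S `` {x}" using X by (auto elim: quotientE)
  have e: "equiv R (genrel R S)" by (rule genrel_equiv)
  from a b x have "(x,a) \<in> genrel R S" "(x,b) \<in> genrel R S" by auto
  then show ?thesis using e unfolding equiv_def by (meson symD transD)
qed

lemma UN_cls:
  assumes W: "W \<in> R // genrel R S" and t0: "t0 \<in> W"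
    and st: "\<And>a b. a \<in> R \<Longrightarrow> b \<in> R \<Longrightarrow> (a,b) \<in> S \<Longrightarrow> F a = F b"
  shows "(\<Union>t\<in>W. F t) = F t0"
proof -
  have eq: "\<And>t. t \<in> W \<Longrightarrow> F t = F t0"
  proof -
    fix t assume "t \<in> W"
    then have h: "(t,t0) \<in> genrel R S" by (rule quot_rel[OF W _ t0])
    show "F t = F t0" by (rule genrel_fun[where \<phi>=F, OF st h])
  qed
  show ?thesis
  proof (rule SUP_eq_const)
    show "W \<noteq> {}" using t0 by blast
    show "\<And>i. i \<in> W \<Longrightarrow> F i = F t0" by (rule eq)
  qed
qed

lemma UN_cls2:
  assumes W: "W \<in> R // genrel R S" and t0: "t0 \<in> W"
    and st: "\<And>a b. a \<in> R \<Longrightarrow> b \<in> R \<Longrightarrow> (a,b) \<in> S \<Longrightarrow> (\<phi> a, \<phi> b) \<in> genrel R' S'"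
  shows "(\<Union>t\<in>W. cls (genrel R' S') (\<phi> t)) = cls (genrel R' S') (\<phi> t0)"
  by (rule UN_cls[OF W t0]) (rule cls_eq, rule st)

lemma hom_iff: "f \<in> hom C a b \<longleftrightarrow> f \<in> cAr C \<and> cdom C f = a \<and> ccod C f = b"
  unfolding hom_def by auto

context fixes C :: "('o,'a) cat" assumes cat: "category C"
begin
lemma cat_comp:
  assumes "f \<in> cAr C" "g \<in> cAr C" "ccod C f = cdom C g"
  shows "ccomp C f g \<in> cAr C" "cdom C (ccomp C f g) = cdom C f" "ccod C (ccomp C f g) = ccod C g"
proof -
  have ax: "\<forall>a b c f g. f \<in> hom C a b \<longrightarrow> g \<in> hom C b c \<longrightarrow> ccomp C f g \<in> hom C a c"
    using cat unfolding category_def by (elim conjE)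
  have h1: "f \<in> hom C (cdom C f) (ccod C f)" "g \<in> hom C (ccod C f) (ccod C g)"
    using assms unfolding hom_iff by auto
  have "ccomp C f g \<in> hom C (cdom C f) (ccod C g)"
    by (rule ax[rule_format, OF h1])
  then show "ccomp C f g \<in> cAr C" "cdom C (ccomp C f g) = cdom C f" "ccod C (ccomp C f g) = ccod C g"
    unfolding hom_iff by auto
qed
lemma cat_id0: "\<forall>a\<in>cOb C. cid C a \<in> hom C a a"
  using cat unfolding category_def by (elim conjE)
lemma cat_id: "a \<in> cOb C \<Longrightarrow> cid C a \<in> cAr C" "a \<in> cOb C \<Longrightarrow> cdom C (cid C a) = a"
  "a \<in> cOb C \<Longrightarrow> ccod C (cid C a) = a"
  using cat_id0 unfolding hom_iff by simp_all
lemma cat_ob0: "\<forall>f\<in>cAr C. cdom C f \<in> cOb C \<and> ccod C f \<in> cOb C"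
  using cat unfolding category_def by (elim conjE)
lemma cat_ob: "f \<in> cAr C \<Longrightarrow> cdom C f \<in> cOb C" "f \<in> cAr C \<Longrightarrow> ccod C f \<in> cOb C"
  using cat_ob0 by simp_all
lemma cat_idlr: "f \<in> cAr C \<Longrightarrow> ccomp C (cid C (cdom C f)) f = f \<and> ccomp C f (cid C (ccod C f)) = f"
proof -
  assume f: "f \<in> cAr C"
  have ax: "\<forall>a b f. f \<in> hom C a b \<longrightarrow> ccomp C (cid C a) f = f \<and> ccomp C f (cid C b) = f"
    using cat unfolding category_def by (elim conjE)
  have h1: "f \<in> hom C (cdom C f) (ccod C f)" using f unfolding hom_iff by auto
  show ?thesis by (rule ax[rule_format, OF h1])
qed
lemma cat_idl: "f \<in> cAr C \<Longrightarrow> cdom C f = a \<Longrightarrow> ccomp C (cid C a) f = f"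
  using cat_idlr by blast
lemma cat_idr: "f \<in> cAr C \<Longrightarrow> ccod C f = a \<Longrightarrow> ccomp C f (cid C a) = f"
  using cat_idlr by blast
lemma cat_assoc:
  assumes "f \<in> cAr C" "g \<in> cAr C" "h \<in> cAr C" "ccod C f = cdom C g" "ccod C g = cdom C h"
  shows "ccomp C (ccomp C f g) h = ccomp C f (ccomp C g h)"
proof -
  have ax: "\<forall>a b c d f g h. f \<in> hom C a b \<longrightarrow> g \<in> hom C b c \<longrightarrow> h \<in> hom C c d \<longrightarrow>
        ccomp C (ccomp C f g) h = ccomp C f (ccomp C g h)" using cat unfolding category_def by (elim conjE)
  have h1: "f \<in> hom C (cdom C f) (ccod C f)" "g \<in> hom C (ccod C f) (ccod C g)" "h \<in> hom C (ccod C g) (ccod C h)"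
    using assms unfolding hom_iff by auto
  show ?thesis by (rule ax[rule_format, OF h1])
qed
lemma iso_inv:
  assumes "is_iso C f a b"
  shows "cinv C f \<in> cAr C" "cdom C (cinv C f) = b" "ccod C (cinv C f) = a"
    "ccomp C f (cinv C f) = cid C a" "ccomp C (cinv C f) f = cid C b"
proof -
  from assms have f: "f \<in> cAr C" "cdom C f = a" "ccod C f = b"
    and ex: "\<exists>g. g \<in> hom C b a \<and> ccomp C f g = cid C a \<and> ccomp C g f = cid C b"
    unfolding is_iso_def by (auto simp: hom_iff)
  have "cinv C f \<in> hom C b a \<and> ccomp C f (cinv C f) = cid C a \<and> ccomp C (cinv C f) f = cid C b"
    unfolding cinv_def f by (rule someI_ex[OF ex])
  then show "cinv C f \<in> cAr C" "cdom C (cinv C f) = b" "ccod C (cinv C f) = a"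
    "ccomp C f (cinv C f) = cid C a" "ccomp C (cinv C f) f = cid C b" unfolding hom_iff by auto
qed
lemma iso_ar: "is_iso C f a b \<Longrightarrow> f \<in> cAr C \<and> cdom C f = a \<and> ccod C f = b"
  unfolding is_iso_def hom_iff by auto
lemma iso_shuffle:
  assumes f: "is_iso C f a b" and g: "is_iso C g c d"
    and X: "X \<in> cAr C" "cdom C X = b" "ccod C X = d"
    and Y: "Y \<in> cAr C" "cdom C Y = a" "ccod C Y = c"
    and eq: "ccomp C f X = ccomp C Y g"
  shows "ccomp C (cinv C f) Y = ccomp C X (cinv C g)"
proof -
  note fi = iso_inv[OF f] and gi = iso_inv[OF g] and fa = iso_ar[OF f] and ga = iso_ar[OF g]
  have "ccomp C (cinv C f) Y = ccomp C (cinv C f) (ccomp C Y (ccomp C g (cinv C g)))"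
    using gi Y by (simp add: cat_idr)
  also have "\<dots> = ccomp C (cinv C f) (ccomp C (ccomp C Y g) (cinv C g))"
    using gi Y ga by (simp add: cat_assoc)
  also have "\<dots> = ccomp C (cinv C f) (ccomp C (ccomp C f X) (cinv C g))" by (simp add: eq)
  also have "\<dots> = ccomp C (cinv C f) (ccomp C f (ccomp C X (cinv C g)))"
    using gi fi X fa ga by (simp add: cat_assoc cat_comp)
  also have "\<dots> = ccomp C (ccomp C (cinv C f) f) (ccomp C X (cinv C g))"
    by (rule cat_assoc[symmetric]) (use gi fi X fa ga in \<open>simp_all add: cat_comp\<close>)
  also have "\<dots> = ccomp C X (cinv C g)"
    using gi fi X fa ga by (simp add: cat_idl cat_comp)
  finally show ?thesis .
qed
end

context fixes A B D FO FA assumes bf: "bifunctor A B D FO FA"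
begin
lemma bf_ob0: "\<forall>a\<in>cOb A. \<forall>b\<in>cOb B. FO a b \<in> cOb D"
  using bf unfolding bifunctor_def by (elim conjE)
lemma bf_ob: "a \<in> cOb A \<Longrightarrow> b \<in> cOb B \<Longrightarrow> FO a b \<in> cOb D"
  using bf_ob0 by simp
lemma bf_ar:
  assumes "f \<in> cAr A" "g \<in> cAr B"
  shows "FA f g \<in> cAr D" "cdom D (FA f g) = FO (cdom A f) (cdom B g)" "ccod D (FA f g) = FO (ccod A f) (ccod B g)"
proof -
  have ax: "\<forall>a a' b b' f g. f \<in> hom A a a' \<longrightarrow> g \<in> hom B b b' \<longrightarrow> FA f g \<in> hom D (FO a b) (FO a' b')"
    using bf unfolding bifunctor_def by (elim conjE)
  have h1: "f \<in> hom A (cdom A f) (ccod A f)" "g \<in> hom B (cdom B g) (ccod B g)"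
    using assms unfolding hom_iff by auto
  have "FA f g \<in> hom D (FO (cdom A f) (cdom B g)) (FO (ccod A f) (ccod B g))"
    by (rule ax[rule_format, OF h1])
  then show "FA f g \<in> cAr D" "cdom D (FA f g) = FO (cdom A f) (cdom B g)" "ccod D (FA f g) = FO (ccod A f) (ccod B g)"
    unfolding hom_iff by auto
qed
lemma bf_id0: "\<forall>a\<in>cOb A. \<forall>b\<in>cOb B. FA (cid A a) (cid B b) = cid D (FO a b)"
  using bf unfolding bifunctor_def by (elim conjE)
lemma bf_id: "a \<in> cOb A \<Longrightarrow> b \<in> cOb B \<Longrightarrow> FA (cid A a) (cid B b) = cid D (FO a b)"
  using bf_id0 by simp
lemma bf_comp:
  assumes "f \<in> cAr A" "f' \<in> cAr A" "ccod A f = cdom A f'" "g \<in> cAr B" "g' \<in> cAr B" "ccod B g = cdom B g'"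
  shows "FA (ccomp A f f') (ccomp B g g') = ccomp D (FA f g) (FA f' g')"
proof -
  have ax: "\<forall>a a' a'' b b' b'' f f' g g'. f \<in> hom A a a' \<longrightarrow> f' \<in> hom A a' a'' \<longrightarrow>
        g \<in> hom B b b' \<longrightarrow> g' \<in> hom B b' b'' \<longrightarrow>
        FA (ccomp A f f') (ccomp B g g') = ccomp D (FA f g) (FA f' g')"
    using bf unfolding bifunctor_def by (elim conjE)
  have h1: "f \<in> hom A (cdom A f) (ccod A f)" "f' \<in> hom A (ccod A f) (ccod A f')"
     "g \<in> hom B (cdom B g) (ccod B g)" "g' \<in> hom B (ccod B g) (ccod B g')"
    using assms unfolding hom_iff by auto
  show ?thesis by (rule ax[rule_format, OF h1])
qed
end

locale AC =
  fixes A :: "('mo,'m,'o,'a) actg"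
  assumes act: "actegory A"
begin

abbreviation cp (infixr "\<cdot>" 70) where "f \<cdot> g \<equiv> ccomp (Ccat A) f g"
abbreviation "ii c \<equiv> cid (Ccat A) c"
abbreviation "act m f \<equiv> actA A (cid (Mcat A) m) f"
abbreviation "wh h y \<equiv> actA A h (cid (Ccat A) y)"
abbreviation "aa m n y \<equiv> aass A m n y"
abbreviation "ai m n y \<equiv> cinv (Ccat A) (aass A m n y)"
abbreviation "arC f \<equiv> f \<in> cAr (Ccat A)"
abbreviation "arM f \<equiv> f \<in> cAr (Mcat A)"
abbreviation "obC c \<equiv> c \<in> cOb (Ccat A)"
abbreviation "obM c \<equiv> c \<in> cOb (Mcat A)"
abbreviation "dC f \<equiv> cdom (Ccat A) f"
abbreviation "cC f \<equiv> ccod (Ccat A) f"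
abbreviation "dM f \<equiv> cdom (Mcat A) f"
abbreviation "cM f \<equiv> ccod (Mcat A) f"

lemma mon: "monoidal A" using act unfolding actegory_def by (elim conjE)

lemma catM: "category (Mcat A)" using mon unfolding monoidal_def Let_def by (elim conjE)
lemma bfT: "bifunctor (Mcat A) (Mcat A) (Mcat A) (tenO A) (tenA A)"
  using mon unfolding monoidal_def Let_def by (elim conjE)
lemma unitob: "munit A \<in> cOb (Mcat A)" using mon unfolding monoidal_def Let_def by (elim conjE)
lemma isoL0: "\<forall>m\<in>cOb (Mcat A). is_iso (Mcat A) (mlam A m) (tenO A (munit A) m) m \<and> is_iso (Mcat A) (mrho A m) (tenO A m (munit A)) m"
  using mon unfolding monoidal_def Let_def by (elim conjE)

lemma catC: "category (Ccat A)" using act unfolding actegory_def Let_def by (elim conjE)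
lemma bfA: "bifunctor (Mcat A) (Ccat A) (Ccat A) (actO A) (actA A)"
  using act unfolding actegory_def Let_def by (elim conjE)
lemma isolam0: "\<forall>x\<in>cOb (Ccat A). is_iso (Ccat A) (alam A x) (actO A (munit A) x) x"
  using act unfolding actegory_def Let_def by (elim conjE)
lemma isoass0: "\<forall>m\<in>cOb (Mcat A). \<forall>n\<in>cOb (Mcat A). \<forall>x\<in>cOb (Ccat A). is_iso (Ccat A) (aass A m n x) (actO A (tenO A m n) x) (actO A m (actO A n x))"
  using act unfolding actegory_def Let_def by (elim conjE)
lemma nat0: "\<forall>m m' n n' x y h k f. h \<in> hom (Mcat A) m m' \<longrightarrow> k \<in> hom (Mcat A) n n' \<longrightarrow> f \<in> hom (Ccat A) x y \<longrightarrow>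
        ccomp (Ccat A) (actA A (tenA A h k) f) (aass A m' n' y) = ccomp (Ccat A) (aass A m n x) (actA A h (actA A k f))"
  using act unfolding actegory_def Let_def by (elim conjE)
lemma coh0: "\<forall>m\<in>cOb (Mcat A). \<forall>x\<in>cOb (Ccat A).
        ccomp (Ccat A) (aass A m (munit A) x) (actA A (cid (Mcat A) m) (alam A x)) = actA A (mrho A m) (cid (Ccat A) x)"
  using act unfolding actegory_def Let_def by (elim conjE)

lemma isorho: "m \<in> cOb (Mcat A) \<Longrightarrow> is_iso (Mcat A) (mrho A m) (tenO A m (munit A)) m" using isoL0 by blast
lemma isolam: "x \<in> cOb (Ccat A) \<Longrightarrow> is_iso (Ccat A) (alam A x) (actO A (munit A) x) x" using isolam0 by blast
lemma isoass: "m \<in> cOb (Mcat A) \<Longrightarrow> n \<in> cOb (Mcat A) \<Longrightarrow> x \<in> cOb (Ccat A) \<Longrightarrow>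
   is_iso (Ccat A) (aass A m n x) (actO A (tenO A m n) x) (actO A m (actO A n x))" using isoass0 by blast

lemma coh: "m \<in> cOb (Mcat A) \<Longrightarrow> x \<in> cOb (Ccat A) \<Longrightarrow>
  ccomp (Ccat A) (aass A m (munit A) x) (actA A (cid (Mcat A) m) (alam A x)) = actA A (mrho A m) (cid (Ccat A) x)"
  using coh0 by blast

lemma nat:
  assumes "h \<in> cAr (Mcat A)" "k \<in> cAr (Mcat A)" "f \<in> cAr (Ccat A)"
  shows "ccomp (Ccat A) (actA A (tenA A h k) f) (aass A (ccod (Mcat A) h) (ccod (Mcat A) k) (ccod (Ccat A) f))
       = ccomp (Ccat A) (aass A (cdom (Mcat A) h) (cdom (Mcat A) k) (cdom (Ccat A) f)) (actA A h (actA A k f))"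
  using nat0 assms unfolding hom_iff by blast

lemmas Ccomp = cat_comp[OF catC] and Mcomp = cat_comp[OF catM]
lemmas Cid = cat_id[OF catC] and Mid = cat_id[OF catM]
lemmas Cob = cat_ob[OF catC] and Mob = cat_ob[OF catM]
lemmas Cidl = cat_idl[OF catC] and Cidr = cat_idr[OF catC]
lemmas Midl = cat_idl[OF catM] and Midr = cat_idr[OF catM]
lemmas Aob = bf_ob[OF bfA] and Tob = bf_ob[OF bfT]
lemmas Aar = bf_ar[OF bfA] and Tar = bf_ar[OF bfT]
lemmas Aid = bf_id[OF bfA] and Tid = bf_id[OF bfT]

lemma Cassoc: "f \<in> cAr (Ccat A) \<Longrightarrow> g \<in> cAr (Ccat A) \<Longrightarrow> h \<in> cAr (Ccat A) \<Longrightarrow>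
  ccod (Ccat A) f = cdom (Ccat A) g \<Longrightarrow> ccod (Ccat A) g = cdom (Ccat A) h \<Longrightarrow>
  ccomp (Ccat A) (ccomp (Ccat A) f g) h = ccomp (Ccat A) f (ccomp (Ccat A) g h)"
  by (rule cat_assoc[OF catC])
lemma Massoc: "f \<in> cAr (Mcat A) \<Longrightarrow> g \<in> cAr (Mcat A) \<Longrightarrow> h \<in> cAr (Mcat A) \<Longrightarrow>
  ccod (Mcat A) f = cdom (Mcat A) g \<Longrightarrow> ccod (Mcat A) g = cdom (Mcat A) h \<Longrightarrow>
  ccomp (Mcat A) (ccomp (Mcat A) f g) h = ccomp (Mcat A) f (ccomp (Mcat A) g h)"
  by (rule cat_assoc[OF catM])

lemma Acomp: "f \<in> cAr (Mcat A) \<Longrightarrow> f' \<in> cAr (Mcat A) \<Longrightarrow> ccod (Mcat A) f = cdom (Mcat A) f' \<Longrightarrow>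
   g \<in> cAr (Ccat A) \<Longrightarrow> g' \<in> cAr (Ccat A) \<Longrightarrow> ccod (Ccat A) g = cdom (Ccat A) g' \<Longrightarrow>
   actA A (ccomp (Mcat A) f f') (ccomp (Ccat A) g g') = ccomp (Ccat A) (actA A f g) (actA A f' g')"
  by (rule bf_comp[OF bfA])

lemmas rho_ar = iso_ar[OF catM isorho]
lemmas lam_ar = iso_ar[OF catC isolam]
lemmas ass_ar = iso_ar[OF catC isoass]
lemmas lam_inv = iso_inv[OF catC isolam]
lemmas ass_inv = iso_inv[OF catC isoass]

lemma lam_inv2:
  "x \<in> cOb (Ccat A) \<Longrightarrow> h \<in> cAr (Ccat A) \<Longrightarrow> cdom (Ccat A) h = x \<Longrightarrow>
    ccomp (Ccat A) (cinv (Ccat A) (alam A x)) (ccomp (Ccat A) (alam A x) h) = h"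
  "x \<in> cOb (Ccat A) \<Longrightarrow> h \<in> cAr (Ccat A) \<Longrightarrow> cdom (Ccat A) h = actO A (munit A) x \<Longrightarrow>
    ccomp (Ccat A) (alam A x) (ccomp (Ccat A) (cinv (Ccat A) (alam A x)) h) = h"
  using lam_inv[of x] lam_ar[of x]
  by (simp_all add: Cassoc[symmetric] Cidl)

lemma ass_inv2:
  "m \<in> cOb (Mcat A) \<Longrightarrow> n \<in> cOb (Mcat A) \<Longrightarrow> x \<in> cOb (Ccat A) \<Longrightarrow> h \<in> cAr (Ccat A) \<Longrightarrow>
   cdom (Ccat A) h = actO A m (actO A n x) \<Longrightarrow>
    ccomp (Ccat A) (cinv (Ccat A) (aass A m n x)) (ccomp (Ccat A) (aass A m n x) h) = h"
  "m \<in> cOb (Mcat A) \<Longrightarrow> n \<in> cOb (Mcat A) \<Longrightarrow> x \<in> cOb (Ccat A) \<Longrightarrow> h \<in> cAr (Ccat A) \<Longrightarrow>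
   cdom (Ccat A) h = actO A (tenO A m n) x \<Longrightarrow>
    ccomp (Ccat A) (aass A m n x) (ccomp (Ccat A) (cinv (Ccat A) (aass A m n x)) h) = h"
  using ass_inv[of m n x] ass_ar[of m n x]
  by (simp_all add: Cassoc[symmetric] Cidl)

lemmas cs = Ccomp Mcomp Cid Mid Cob Mob Cidl Cidr Midl Midr Aob Tob Aar Tar Aid Tid Cassoc Massoc
  rho_ar lam_ar ass_ar lam_inv ass_inv lam_inv2 ass_inv2 unitob


lemma natN1:
  assumes "obM n" "arM h" "dM h = k'" "cM h = k" "obC y"
  shows "wh (tenA A (cid (Mcat A) n) h) y \<cdot> aa n k y = aa n k' y \<cdot> act n (wh h y)"
  using nat[of "cid (Mcat A) n" h "cid (Ccat A) y"] assms by (simp add: cs)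

lemma natN2:
  assumes "obM n" "arM h" "dM h = k'" "cM h = k" "obC y"
  shows "ai n k' y \<cdot> wh (tenA A (cid (Mcat A) n) h) y = act n (wh h y) \<cdot> ai n k y"
proof -
  have "obM k" "obM k'" using assms Mob by auto
  then show ?thesis
  apply -
  apply (rule iso_shuffle[OF catC isoass isoass])
  using assms natN1[OF assms] by (simp_all add: cs)
qed

end

context AC begin

lemma act_comp: "obM m \<Longrightarrow> arC f \<Longrightarrow> arC g \<Longrightarrow> cC f = dC g \<Longrightarrow> act m (f \<cdot> g) = act m f \<cdot> act m g"
  using Acomp[of "cid (Mcat A) m" "cid (Mcat A) m" f g] by (simp add: cs)

lemma wh_comp: "arM h \<Longrightarrow> arM h' \<Longrightarrow> cM h = dM h' \<Longrightarrow> obC y \<Longrightarrow>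
   wh (ccomp (Mcat A) h h') y = wh h y \<cdot> wh h' y"
  using Acomp[of h h' "cid (Ccat A) y" "cid (Ccat A) y"] by (simp add: cs)

lemma natN1':
  assumes "obM n" "arM h" "dM h = k'" "cM h = k" "obC y" "arC r" "dC r = actO A n (actO A k y)"
  shows "wh (tenA A (cid (Mcat A) n) h) y \<cdot> (aa n k y \<cdot> r) = aa n k' y \<cdot> (act n (wh h y) \<cdot> r)"
proof -
  have "obM k" "obM k'" using assms Mob by auto
  then show ?thesis
    using natN1[OF assms(1-5)] assms Cassoc[of "wh (tenA A (cid (Mcat A) n) h) y" "aa n k y" r]
      Cassoc[of "aa n k' y" "act n (wh h y)" r] by (simp add: cs)
qed

lemma natN2':
  assumes "obM n" "arM h" "dM h = k'" "cM h = k" "obC y" "arC r" "dC r = actO A (tenO A n k) y"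
  shows "ai n k' y \<cdot> (wh (tenA A (cid (Mcat A) n) h) y \<cdot> r) = act n (wh h y) \<cdot> (ai n k y \<cdot> r)"
proof -
  have "obM k" "obM k'" using assms Mob by auto
  then show ?thesis
    using natN2[OF assms(1-5)] assms Cassoc[of "ai n k' y" "wh (tenA A (cid (Mcat A) n) h) y" r]
      Cassoc[of "act n (wh h y)" "ai n k y" r] by (simp add: cs)
qed

lemma opt_reps_iff: "(n,f,g) \<in> opt_reps A c c' x x \<longleftrightarrow>
   obM n \<and> arC f \<and> dC f = c \<and> cC f = actO A n x \<and> arC g \<and> dC g = actO A n x \<and> cC g = c'"
  unfolding opt_reps_def hom_iff by auto

lemma opt_stepI:
  assumes "arM h" "dM h = n" "cM h = m" "obC x"
    "arC \<alpha>" "dC \<alpha> = c" "cC \<alpha> = actO A n x" "arC \<beta>" "dC \<beta> = actO A m x" "cC \<beta> = c'"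
  shows "((m, \<alpha> \<cdot> wh h x, \<beta>), (n, \<alpha>, wh h x \<cdot> \<beta>)) \<in> opt_rel A c c' x x"
proof -
  have ob: "obM n" "obM m" using assms Mob by auto
  show ?thesis
    unfolding opt_rel_def
  proof (rule genrel_step)
    show "(m, \<alpha> \<cdot> wh h x, \<beta>) \<in> opt_reps A c c' x x" "(n, \<alpha>, wh h x \<cdot> \<beta>) \<in> opt_reps A c c' x x"
      unfolding opt_reps_iff using assms ob by (simp_all add: cs)
    show "((m, \<alpha> \<cdot> wh h x, \<beta>), (n, \<alpha>, wh h x \<cdot> \<beta>)) \<in> opt_step A c c' x x"
      unfolding opt_step_def hom_iff using assms by blast
  qed
qed

lemma opt_stepE:
  assumes "(a,b) \<in> opt_step A c c' x x"
  obtains m n h \<alpha> \<beta> where "a = (m, \<alpha> \<cdot> wh h x, \<beta>)" "b = (n, \<alpha>, wh h x \<cdot> \<beta>)"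
    "arM h" "dM h = n" "cM h = m" "arC \<alpha>" "dC \<alpha> = c" "cC \<alpha> = actO A n x"
    "arC \<beta>" "dC \<beta> = actO A m x" "cC \<beta> = c'"
  using assms unfolding opt_step_def hom_iff by blast

lemma RL_quot: "W \<in> RL A x c c' \<Longrightarrow> W \<in> opt_reps A c c' x x // genrel (opt_reps A c c' x x) (opt_step A c c' x x)"
  unfolding RL_def Optic_def opt_rel_def .

lemma dimap_cls:
  assumes W: "W \<in> RL A x c c'" and t: "(n,f,g) \<in> W" and x: "obC x"
    and p: "arC p" "dC p = d" "cC p = c" and q: "arC q" "dC q = c'" "cC q = d'"
  shows "rl_dimap A x d d' p q W = cls (opt_rel A d d' x x) (n, p \<cdot> f, g \<cdot> q)"
  unfolding rl_dimap_def
proof (rule trans[OF UN_cls[OF RL_quot[OF W] t]])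
  fix a b assume a: "a \<in> opt_reps A c c' x x" and b: "b \<in> opt_reps A c c' x x"
    and ab: "(a,b) \<in> opt_step A c c' x x"
  from ab obtain m n h \<alpha> \<beta> where e: "a = (m, \<alpha> \<cdot> wh h x, \<beta>)" "b = (n, \<alpha>, wh h x \<cdot> \<beta>)"
    and ty: "arM h" "dM h = n" "cM h = m" "arC \<alpha>" "dC \<alpha> = c" "cC \<alpha> = actO A n x"
    "arC \<beta>" "dC \<beta> = actO A m x" "cC \<beta> = c'" by (rule opt_stepE)
  have ob: "obM n" "obM m" using ty Mob by auto
  have "((m, (p \<cdot> \<alpha>) \<cdot> wh h x, \<beta> \<cdot> q), (n, p \<cdot> \<alpha>, wh h x \<cdot> (\<beta> \<cdot> q))) \<in> opt_rel A d d' x x"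
    by (rule opt_stepI) (use ty p q x ob in \<open>simp_all add: cs\<close>)
  then have "cls (opt_rel A d d' x x) (m, (p \<cdot> \<alpha>) \<cdot> wh h x, \<beta> \<cdot> q) = cls (opt_rel A d d' x x) (n, p \<cdot> \<alpha>, wh h x \<cdot> (\<beta> \<cdot> q))"
    unfolding opt_rel_def by (rule cls_eq)
  then show "(case a of (n, f, g) \<Rightarrow> cls (opt_rel A d d' x x) (n, p \<cdot> f, g \<cdot> q)) =
             (case b of (n, f, g) \<Rightarrow> cls (opt_rel A d d' x x) (n, p \<cdot> f, g \<cdot> q))"
    using ty p q x ob unfolding e by (simp add: cs)
qed simp


lemma str_cls:
  assumes W: "W \<in> RL A x c c'" and t: "(k,f,g) \<in> W" and x: "obC x" and m: "obM m"
  shows "rl_str A x m c c' W = cls (opt_rel A (actO A m c) (actO A m c') x x)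
           (tenO A m k, act m f \<cdot> ai m k x, aa m k x \<cdot> act m g)"
  unfolding rl_str_def
proof (rule trans[OF UN_cls[OF RL_quot[OF W] t]])
  fix a b assume a: "a \<in> opt_reps A c c' x x" and b: "b \<in> opt_reps A c c' x x"
    and ab: "(a,b) \<in> opt_step A c c' x x"
  from ab obtain k1 k2 h \<alpha> \<beta> where e: "a = (k1, \<alpha> \<cdot> wh h x, \<beta>)" "b = (k2, \<alpha>, wh h x \<cdot> \<beta>)"
    and ty: "arM h" "dM h = k2" "cM h = k1" "arC \<alpha>" "dC \<alpha> = c" "cC \<alpha> = actO A k2 x"
    "arC \<beta>" "dC \<beta> = actO A k1 x" "cC \<beta> = c'" by (rule opt_stepE)
  have ob: "obM k1" "obM k2" using ty Mob by auto
  let ?u = "tenA A (cid (Mcat A) m) h"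
  have "((tenO A m k1, (act m \<alpha> \<cdot> ai m k2 x) \<cdot> wh ?u x, aa m k1 x \<cdot> act m \<beta>),
         (tenO A m k2, act m \<alpha> \<cdot> ai m k2 x, wh ?u x \<cdot> (aa m k1 x \<cdot> act m \<beta>))) \<in> opt_rel A (actO A m c) (actO A m c') x x"
    by (rule opt_stepI) (use ty x ob m in \<open>simp_all add: cs\<close>)
  then have "cls (opt_rel A (actO A m c) (actO A m c') x x) (tenO A m k1, (act m \<alpha> \<cdot> ai m k2 x) \<cdot> wh ?u x, aa m k1 x \<cdot> act m \<beta>)
     = cls (opt_rel A (actO A m c) (actO A m c') x x) (tenO A m k2, act m \<alpha> \<cdot> ai m k2 x, wh ?u x \<cdot> (aa m k1 x \<cdot> act m \<beta>))"
    unfolding opt_rel_def by (rule cls_eq)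
  then show "(case a of (n, f, g) \<Rightarrow> cls (opt_rel A (actO A m c) (actO A m c') x x)
                 (tenO A m n, act m f \<cdot> ai m n x, aa m n x \<cdot> act m g)) =
             (case b of (n, f, g) \<Rightarrow> cls (opt_rel A (actO A m c) (actO A m c') x x)
                 (tenO A m n, act m f \<cdot> ai m n x, aa m n x \<cdot> act m g))"
    using ty x ob m unfolding e by (simp add: cs act_comp natN1' natN2' natN2)
qed simp

end

context AC begin

lemma rep4_iff: "(n1,f,d,g,n2,h,k) \<in> rep4 A x c c' \<longleftrightarrow>
   obM n1 \<and> arC f \<and> dC f = c \<and> cC f = actO A n1 x \<and> obC d \<and> arC g \<and> dC g = actO A n1 x \<and> cC g = d \<and>
   obM n2 \<and> arC h \<and> dC h = d \<and> cC h = actO A n2 x \<and> arC k \<and> dC k = actO A n2 x \<and> cC k = c'"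
  unfolding rep4_def hom_iff by auto

lemma rel4_trans: "(a,b) \<in> rel4 A x c c' \<Longrightarrow> (b,e) \<in> rel4 A x c c' \<Longrightarrow> (a,e) \<in> rel4 A x c c'"
  using genrel_equiv[of "rep4 A x c c'" "step4 A x"] unfolding rel4_def equiv_def by (meson transD)
lemma rel4_sym: "(a,b) \<in> rel4 A x c c' \<Longrightarrow> (b,a) \<in> rel4 A x c c'"
  using genrel_equiv[of "rep4 A x c c'" "step4 A x"] unfolding rel4_def equiv_def by (meson symD)

lemma S1:
  assumes "arM u" "dM u = n1" "cM u = m1" "obC x"
    "arC f" "dC f = c" "cC f = actO A n1 x" "obC d" "arC g" "dC g = actO A m1 x" "cC g = d"
    "obM n2" "arC h" "dC h = d" "cC h = actO A n2 x" "arC k" "dC k = actO A n2 x" "cC k = c'"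
  shows "((m1, f \<cdot> wh u x, d, g, n2, h, k), (n1, f, d, wh u x \<cdot> g, n2, h, k)) \<in> rel4 A x c c'"
proof -
  have ob: "obM n1" "obM m1" using assms Mob by auto
  show ?thesis unfolding rel4_def
  proof (rule genrel_step)
    show "(m1, f \<cdot> wh u x, d, g, n2, h, k) \<in> rep4 A x c c'" "(n1, f, d, wh u x \<cdot> g, n2, h, k) \<in> rep4 A x c c'"
      unfolding rep4_iff using assms ob by (simp_all add: cs)
    show "((m1, f \<cdot> wh u x, d, g, n2, h, k), (n1, f, d, wh u x \<cdot> g, n2, h, k)) \<in> step4 A x"
      unfolding step4_def hom_iff by (rule UnI1, rule UnI1) (use assms in blast)
  qed
qed

lemma S2:
  assumes "arC p" "dC p = d" "cC p = d'" "obC x"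
    "obM n1" "arC f" "dC f = c" "cC f = actO A n1 x" "arC g" "dC g = actO A n1 x"
    "obM n2" "arC h" "dC h = d'" "cC h = actO A n2 x" "arC k" "dC k = actO A n2 x" "cC k = c'"
    "cC g = d"
  shows "((n1, f, d', g \<cdot> p, n2, h, k), (n1, f, d, g, n2, p \<cdot> h, k)) \<in> rel4 A x c c'"
proof -
  have ob: "obC d" "obC d'" using assms Cob by auto
  show ?thesis unfolding rel4_def
  proof (rule genrel_step)
    show "(n1, f, d', g \<cdot> p, n2, h, k) \<in> rep4 A x c c'" "(n1, f, d, g, n2, p \<cdot> h, k) \<in> rep4 A x c c'"
      unfolding rep4_iff using assms ob by (simp_all add: cs)
    show "((n1, f, d', g \<cdot> p, n2, h, k), (n1, f, d, g, n2, p \<cdot> h, k)) \<in> step4 A x"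
      unfolding step4_def hom_iff by (rule UnI1, rule UnI2) (use assms in blast)
  qed
qed

lemma S3:
  assumes "arM u" "dM u = n2" "cM u = m2" "obC x"
    "obM n1" "arC f" "dC f = c" "cC f = actO A n1 x" "obC d" "arC g" "dC g = actO A n1 x" "cC g = d"
    "arC h" "dC h = d" "cC h = actO A n2 x" "arC k" "dC k = actO A m2 x" "cC k = c'"
  shows "((n1, f, d, g, m2, h \<cdot> wh u x, k), (n1, f, d, g, n2, h, wh u x \<cdot> k)) \<in> rel4 A x c c'"
proof -
  have ob: "obM n2" "obM m2" using assms Mob by auto
  show ?thesis unfolding rel4_def
  proof (rule genrel_step)
    show "(n1, f, d, g, m2, h \<cdot> wh u x, k) \<in> rep4 A x c c'" "(n1, f, d, g, n2, h, wh u x \<cdot> k) \<in> rep4 A x c c'"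
      unfolding rep4_iff using assms ob by (simp_all add: cs)
    show "((n1, f, d, g, m2, h \<cdot> wh u x, k), (n1, f, d, g, n2, h, wh u x \<cdot> k)) \<in> step4 A x"
      unfolding step4_def hom_iff by (rule UnI2) (use assms in blast)
  qed
qed

lemma step4E:
  assumes "(a,b) \<in> step4 A x"
  obtains (s1) m1 n1 u f d g n2 h k where "a = (m1, f \<cdot> wh u x, d, g, n2, h, k)" "b = (n1, f, d, wh u x \<cdot> g, n2, h, k)"
      "arM u" "dM u = n1" "cM u = m1"
  | (s2) n1 f d d' g p n2 h k where "a = (n1, f, d', g \<cdot> p, n2, h, k)" "b = (n1, f, d, g, n2, p \<cdot> h, k)"
      "arC p" "dC p = d" "cC p = d'"
  | (s3) n1 f d g m2 n2 u h k where "a = (n1, f, d, g, m2, h \<cdot> wh u x, k)" "b = (n1, f, d, g, n2, h, wh u x \<cdot> k)"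
      "arM u" "dM u = n2" "cM u = m2"
  using assms unfolding step4_def hom_iff
  apply (simp only: Un_iff mem_Collect_eq prod.inject)
  apply (elim disjE exE conjE)
    apply blast
   apply blast
  apply metis
  done

lemma RL_rep: "W \<in> RL A x c c' \<Longrightarrow> t \<in> W \<Longrightarrow> t \<in> opt_reps A c c' x x"
  by (rule genrel_R[THEN conjunct1], rule quot_rel[OF RL_quot]) assumption+

lemma dbl_cls:
  assumes W: "W \<in> RL A x c c'" and t: "(n,f,g) \<in> W" and x: "obC x"
  shows "dbl A x c c' W = cls (rel4 A x c c') (n, f, actO A n x, ii (actO A n x), n, ii (actO A n x), g)"
  unfolding dbl_def
proof (rule trans[OF UN_cls[OF RL_quot[OF W] t]])
  fix a b assume a: "a \<in> opt_reps A c c' x x" and b: "b \<in> opt_reps A c c' x x"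
    and ab: "(a,b) \<in> opt_step A c c' x x"
  from ab obtain k1 k2 h \<alpha> \<beta> where e: "a = (k1, \<alpha> \<cdot> wh h x, \<beta>)" "b = (k2, \<alpha>, wh h x \<cdot> \<beta>)"
    and ty: "arM h" "dM h = k2" "cM h = k1" "arC \<alpha>" "dC \<alpha> = c" "cC \<alpha> = actO A k2 x"
    "arC \<beta>" "dC \<beta> = actO A k1 x" "cC \<beta> = c'" by (rule opt_stepE)
  have ob: "obM k1" "obM k2" using ty Mob by auto
  let ?H = "wh h x"
  have r1: "((k1, \<alpha> \<cdot> ?H, actO A k1 x, ii (actO A k1 x), k1, ii (actO A k1 x), \<beta>),
             (k2, \<alpha>, actO A k1 x, ?H \<cdot> ii (actO A k1 x), k1, ii (actO A k1 x), \<beta>)) \<in> rel4 A x c c'"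
    by (rule S1) (use ty x ob in \<open>simp_all add: cs\<close>)
  have r2: "((k2, \<alpha>, actO A k1 x, ii (actO A k2 x) \<cdot> ?H, k1, ii (actO A k1 x), \<beta>),
             (k2, \<alpha>, actO A k2 x, ii (actO A k2 x), k1, ?H \<cdot> ii (actO A k1 x), \<beta>)) \<in> rel4 A x c c'"
    by (rule S2) (use ty x ob in \<open>simp_all add: cs\<close>)
  have r3: "((k2, \<alpha>, actO A k2 x, ii (actO A k2 x), k1, ii (actO A k2 x) \<cdot> ?H, \<beta>),
             (k2, \<alpha>, actO A k2 x, ii (actO A k2 x), k2, ii (actO A k2 x), ?H \<cdot> \<beta>)) \<in> rel4 A x c c'"
    by (rule S3) (use ty x ob in \<open>simp_all add: cs\<close>)
  have "((k1, \<alpha> \<cdot> ?H, actO A k1 x, ii (actO A k1 x), k1, ii (actO A k1 x), \<beta>),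
         (k2, \<alpha>, actO A k2 x, ii (actO A k2 x), k2, ii (actO A k2 x), ?H \<cdot> \<beta>)) \<in> rel4 A x c c'"
    using r1 r2 r3 ty x ob by (simp add: cs) (meson rel4_trans)
  then show "(case a of (n, f, g) \<Rightarrow> cls (rel4 A x c c')
          (n, f, actO A n x, actA A (cid (Mcat A) n) (cid (Ccat A) x), n, ii (actO A n x), g)) =
       (case b of (n, f, g) \<Rightarrow> cls (rel4 A x c c')
          (n, f, actO A n x, actA A (cid (Mcat A) n) (cid (Ccat A) x), n, ii (actO A n x), g))"
    using ty x ob unfolding e rel4_def by (simp add: cs cls_eq)
next
  have "obM n" using RL_rep[OF W t] unfolding opt_reps_iff by simp
  then show "(case (n, f, g) of (n, f, g) \<Rightarrow> cls (rel4 A x c c')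
          (n, f, actO A n x, actA A (cid (Mcat A) n) (cid (Ccat A) x), n, ii (actO A n x), g)) =
     cls (rel4 A x c c') (n, f, actO A n x, ii (actO A n x), n, ii (actO A n x), g)"
    using x by (simp add: cs)
qed

end

context AC begin

lemma glue_inner:
  assumes V: "V \<in> RL A y d c'" and t: "(n2,h,k) \<in> V" and y: "obC y" and d: "obC d"
    and ty: "obM n1" "arC f" "dC f = c" "cC f = actO A n1 y" "arC g" "dC g = actO A n1 y" "cC g = d"
  shows "(\<Union>(n2,h,k)\<in>V. cls (rel4 A y c c') (n1,f,d,g,n2,h,k)) = cls (rel4 A y c c') (n1,f,d,g,n2,h,k)"
proof (rule trans[OF UN_cls[OF RL_quot[OF V] t]])
  fix a b assume a: "a \<in> opt_reps A d c' y y" and b: "b \<in> opt_reps A d c' y y"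
    and ab: "(a,b) \<in> opt_step A d c' y y"
  from ab obtain m n u \<alpha> \<beta> where e: "a = (m, \<alpha> \<cdot> wh u y, \<beta>)" "b = (n, \<alpha>, wh u y \<cdot> \<beta>)"
    and ty2: "arM u" "dM u = n" "cM u = m" "arC \<alpha>" "dC \<alpha> = d" "cC \<alpha> = actO A n y"
    "arC \<beta>" "dC \<beta> = actO A m y" "cC \<beta> = c'" by (rule opt_stepE)
  have "((n1, f, d, g, m, \<alpha> \<cdot> wh u y, \<beta>), (n1, f, d, g, n, \<alpha>, wh u y \<cdot> \<beta>)) \<in> rel4 A y c c'"
    by (rule S3) (use ty ty2 y d in \<open>simp_all\<close>)
  then show "(case a of (n2, h, k) \<Rightarrow> cls (rel4 A y c c') (n1, f, d, g, n2, h, k)) =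
        (case b of (n2, h, k) \<Rightarrow> cls (rel4 A y c c') (n1, f, d, g, n2, h, k))"
    unfolding e rel4_def by (simp add: cls_eq)
qed simp

lemma glue_cls:
  assumes U: "U \<in> RL A y c d" and V: "V \<in> RL A y d c'" and t1: "(n1,f,g) \<in> U" and t2: "(n2,h,k) \<in> V"
    and y: "obC y" and d: "obC d"
  shows "glue A y c d c' U V = cls (rel4 A y c c') (n1,f,d,g,n2,h,k)"
  unfolding glue_def
proof (rule trans[OF UN_cls[OF RL_quot[OF U] t1]])
  fix a b assume a: "a \<in> opt_reps A c d y y" and b: "b \<in> opt_reps A c d y y"
    and ab: "(a,b) \<in> opt_step A c d y y"
  from ab obtain m n u \<alpha> \<beta> where e: "a = (m, \<alpha> \<cdot> wh u y, \<beta>)" "b = (n, \<alpha>, wh u y \<cdot> \<beta>)"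
    and ty2: "arM u" "dM u = n" "cM u = m" "arC \<alpha>" "dC \<alpha> = c" "cC \<alpha> = actO A n y"
    "arC \<beta>" "dC \<beta> = actO A m y" "cC \<beta> = d" by (rule opt_stepE)
  have ob: "obM m" "obM n" using ty2 Mob by auto
  have tv: "(n2,h,k) \<in> opt_reps A d c' y y" by (rule RL_rep[OF V t2])
  have "((m, \<alpha> \<cdot> wh u y, d, \<beta>, n2, h, k), (n, \<alpha>, d, wh u y \<cdot> \<beta>, n2, h, k)) \<in> rel4 A y c c'"
    by (rule S1) (use ty2 y d tv in \<open>simp_all add: opt_reps_iff\<close>)
  then have "cls (rel4 A y c c') (m, \<alpha> \<cdot> wh u y, d, \<beta>, n2, h, k) = cls (rel4 A y c c') (n, \<alpha>, d, wh u y \<cdot> \<beta>, n2, h, k)"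
    unfolding rel4_def by (rule cls_eq)
  moreover have "(\<Union>(n2,h,k)\<in>V. cls (rel4 A y c c') (m, \<alpha> \<cdot> wh u y, d, \<beta>, n2, h, k)) = cls (rel4 A y c c') (m, \<alpha> \<cdot> wh u y, d, \<beta>, n2, h, k)"
    by (rule glue_inner[OF V t2 y d]) (use ty2 ob y in \<open>simp_all add: cs\<close>)
  moreover have "(\<Union>(n2,h,k)\<in>V. cls (rel4 A y c c') (n, \<alpha>, d, wh u y \<cdot> \<beta>, n2, h, k)) = cls (rel4 A y c c') (n, \<alpha>, d, wh u y \<cdot> \<beta>, n2, h, k)"
    by (rule glue_inner[OF V t2 y d]) (use ty2 ob y in \<open>simp_all add: cs\<close>)
  ultimately show "(case a of (n1, f, g) \<Rightarrow> \<Union>(n2,h,k)\<in>V. cls (rel4 A y c c') (n1, f, d, g, n2, h, k)) =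
        (case b of (n1, f, g) \<Rightarrow> \<Union>(n2,h,k)\<in>V. cls (rel4 A y c c') (n1, f, d, g, n2, h, k))"
    unfolding e by simp
next
  have tu: "(n1,f,g) \<in> opt_reps A c d y y" by (rule RL_rep[OF U t1])
  show "(case (n1, f, g) of (n1, f, g) \<Rightarrow> \<Union>(n2,h,k)\<in>V. cls (rel4 A y c c') (n1, f, d, g, n2, h, k)) =
    cls (rel4 A y c c') (n1, f, d, g, n2, h, k)"
    using glue_inner[OF V t2 y d, of n1 f c g] tu unfolding opt_reps_iff by simp
qed

end

context AC begin

lemma opt2_reps_iff: "(m1,m2,\<alpha>,\<gamma>,\<beta>) \<in> opt2_reps A x y \<longleftrightarrow>
   obM m1 \<and> obM m2 \<and> arC \<alpha> \<and> dC \<alpha> = x \<and> cC \<alpha> = actO A m1 y \<and> arC \<gamma> \<and> dC \<gamma> = actO A m1 y \<and>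
   cC \<gamma> = actO A m2 y \<and> arC \<beta> \<and> dC \<beta> = actO A m2 y \<and> cC \<beta> = x"
  unfolding opt2_reps_def hom_iff by auto

lemma rel2_trans: "(a,b) \<in> opt2_rel A x y \<Longrightarrow> (b,e) \<in> opt2_rel A x y \<Longrightarrow> (a,e) \<in> opt2_rel A x y"
  using genrel_equiv[of "opt2_reps A x y" "opt2_step A x y"] unfolding opt2_rel_def equiv_def by (meson transD)

lemma O1:
  assumes "arM h" "dM h = n1" "cM h = m1" "obC y"
    "arC \<alpha>" "dC \<alpha> = x" "cC \<alpha> = actO A n1 y" "arC \<gamma>" "dC \<gamma> = actO A m1 y" "cC \<gamma> = actO A m2 y"
    "obM m2" "arC \<beta>" "dC \<beta> = actO A m2 y" "cC \<beta> = x"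
  shows "((m1, m2, \<alpha> \<cdot> wh h y, \<gamma>, \<beta>), (n1, m2, \<alpha>, wh h y \<cdot> \<gamma>, \<beta>)) \<in> opt2_rel A x y"
proof -
  have ob: "obM n1" "obM m1" using assms Mob by auto
  show ?thesis unfolding opt2_rel_def
  proof (rule genrel_step)
    show "(m1, m2, \<alpha> \<cdot> wh h y, \<gamma>, \<beta>) \<in> opt2_reps A x y" "(n1, m2, \<alpha>, wh h y \<cdot> \<gamma>, \<beta>) \<in> opt2_reps A x y"
      unfolding opt2_reps_iff using assms ob by (simp_all add: cs)
    show "((m1, m2, \<alpha> \<cdot> wh h y, \<gamma>, \<beta>), (n1, m2, \<alpha>, wh h y \<cdot> \<gamma>, \<beta>)) \<in> opt2_step A x y"
      unfolding opt2_step_def hom_iff by (rule UnI1) (use assms in blast)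
  qed
qed

lemma O2:
  assumes "arM h" "dM h = n2" "cM h = m2" "obC y"
    "obM m1" "arC \<alpha>" "dC \<alpha> = x" "cC \<alpha> = actO A m1 y" "arC \<gamma>" "dC \<gamma> = actO A m1 y" "cC \<gamma> = actO A n2 y"
    "arC \<beta>" "dC \<beta> = actO A m2 y" "cC \<beta> = x"
  shows "((m1, m2, \<alpha>, \<gamma> \<cdot> wh h y, \<beta>), (m1, n2, \<alpha>, \<gamma>, wh h y \<cdot> \<beta>)) \<in> opt2_rel A x y"
proof -
  have ob: "obM n2" "obM m2" using assms Mob by auto
  show ?thesis unfolding opt2_rel_def
  proof (rule genrel_step)
    show "(m1, m2, \<alpha>, \<gamma> \<cdot> wh h y, \<beta>) \<in> opt2_reps A x y" "(m1, n2, \<alpha>, \<gamma>, wh h y \<cdot> \<beta>) \<in> opt2_reps A x y"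
      unfolding opt2_reps_iff using assms ob by (simp_all add: cs)
    show "((m1, m2, \<alpha>, \<gamma> \<cdot> wh h y, \<beta>), (m1, n2, \<alpha>, \<gamma>, wh h y \<cdot> \<beta>)) \<in> opt2_step A x y"
      unfolding opt2_step_def hom_iff by (rule UnI2) (use assms in blast)
  qed
qed

lemma Optic_RL: "Optic A x x y y = RL A y x x" unfolding RL_def ..

lemma once_cls:
  assumes l: "l \<in> Optic A x x y y" and t: "(m,\<alpha>,\<beta>) \<in> l" and y: "obC y"
  shows "once A x y l = cls (opt2_rel A x y) (m, m, \<alpha>, ii (actO A m y), \<beta>)"
  unfolding once_def
proof (rule trans[OF UN_cls[OF RL_quot[OF l[unfolded Optic_RL]] t]])
  fix a b assume a: "a \<in> opt_reps A x x y y" and b: "b \<in> opt_reps A x x y y"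
    and ab: "(a,b) \<in> opt_step A x x y y"
  from ab obtain k1 k2 h \<alpha> \<beta> where e: "a = (k1, \<alpha> \<cdot> wh h y, \<beta>)" "b = (k2, \<alpha>, wh h y \<cdot> \<beta>)"
    and ty: "arM h" "dM h = k2" "cM h = k1" "arC \<alpha>" "dC \<alpha> = x" "cC \<alpha> = actO A k2 y"
    "arC \<beta>" "dC \<beta> = actO A k1 y" "cC \<beta> = x" by (rule opt_stepE)
  have ob: "obM k1" "obM k2" using ty Mob by auto
  have r1: "((k1, k1, \<alpha> \<cdot> wh h y, ii (actO A k1 y), \<beta>), (k2, k1, \<alpha>, wh h y \<cdot> ii (actO A k1 y), \<beta>)) \<in> opt2_rel A x y"
    by (rule O1) (use ty ob y in \<open>simp_all add: cs\<close>)
  have r2: "((k2, k1, \<alpha>, ii (actO A k2 y) \<cdot> wh h y, \<beta>), (k2, k2, \<alpha>, ii (actO A k2 y), wh h y \<cdot> \<beta>)) \<in> opt2_rel A x y"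
    by (rule O2) (use ty ob y in \<open>simp_all add: cs\<close>)
  have "((k1, k1, \<alpha> \<cdot> wh h y, ii (actO A k1 y), \<beta>), (k2, k2, \<alpha>, ii (actO A k2 y), wh h y \<cdot> \<beta>)) \<in> opt2_rel A x y"
    using r1 r2 ty ob y by (simp add: cs) (meson rel2_trans)
  then show "(case a of (m, \<alpha>, \<beta>) \<Rightarrow> cls (opt2_rel A x y) (m, m, \<alpha>, ii (actO A m y), \<beta>)) =
       (case b of (m, \<alpha>, \<beta>) \<Rightarrow> cls (opt2_rel A x y) (m, m, \<alpha>, ii (actO A m y), \<beta>))"
    unfolding e opt2_rel_def by (simp add: cls_eq)
qed simp

lemma twice_cls:
  assumes l: "l \<in> Optic A x x y y" and t: "(m,\<alpha>,\<beta>) \<in> l" and y: "obC y"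
  shows "twice A x y l = cls (opt2_rel A x y) (m, m, \<alpha>, \<beta> \<cdot> \<alpha>, \<beta>)"
  unfolding twice_def
proof (rule trans[OF UN_cls[OF RL_quot[OF l[unfolded Optic_RL]] t]])
  fix a b assume a: "a \<in> opt_reps A x x y y" and b: "b \<in> opt_reps A x x y y"
    and ab: "(a,b) \<in> opt_step A x x y y"
  from ab obtain k1 k2 h \<alpha> \<beta> where e: "a = (k1, \<alpha> \<cdot> wh h y, \<beta>)" "b = (k2, \<alpha>, wh h y \<cdot> \<beta>)"
    and ty: "arM h" "dM h = k2" "cM h = k1" "arC \<alpha>" "dC \<alpha> = x" "cC \<alpha> = actO A k2 y"
    "arC \<beta>" "dC \<beta> = actO A k1 y" "cC \<beta> = x" by (rule opt_stepE)
  have ob: "obM k1" "obM k2" using ty Mob by auto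
  have r1: "((k1, k1, \<alpha> \<cdot> wh h y, \<beta> \<cdot> (\<alpha> \<cdot> wh h y), \<beta>), (k2, k1, \<alpha>, wh h y \<cdot> (\<beta> \<cdot> (\<alpha> \<cdot> wh h y)), \<beta>)) \<in> opt2_rel A x y"
    by (rule O1) (use ty ob y in \<open>simp_all add: cs\<close>)
  have r2: "((k2, k1, \<alpha>, (wh h y \<cdot> (\<beta> \<cdot> \<alpha>)) \<cdot> wh h y, \<beta>), (k2, k2, \<alpha>, wh h y \<cdot> (\<beta> \<cdot> \<alpha>), wh h y \<cdot> \<beta>)) \<in> opt2_rel A x y"
    by (rule O2) (use ty ob y in \<open>simp_all add: cs\<close>)
  have "((k1, k1, \<alpha> \<cdot> wh h y, \<beta> \<cdot> (\<alpha> \<cdot> wh h y), \<beta>), (k2, k2, \<alpha>, (wh h y \<cdot> \<beta>) \<cdot> \<alpha>, wh h y \<cdot> \<beta>)) \<in> opt2_rel A x y"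
    using r1 r2 ty ob y by (simp add: cs) (meson rel2_trans)
  then show "(case a of (m, \<alpha>, \<beta>) \<Rightarrow> cls (opt2_rel A x y) (m, m, \<alpha>, \<beta> \<cdot> \<alpha>, \<beta>)) =
       (case b of (m, \<alpha>, \<beta>) \<Rightarrow> cls (opt2_rel A x y) (m, m, \<alpha>, \<beta> \<cdot> \<alpha>, \<beta>))"
    unfolding e opt2_rel_def by (simp add: cls_eq)
qed simp

lemma outside_eq:
  assumes W: "W \<in> RL A x c c'" and t: "(m,\<alpha>,\<beta>) \<in> W" and x: "obC x"
  shows "outside A W = \<alpha> \<cdot> \<beta>"
proof -
  have ex: "\<exists>s. s \<in> W" using t by blast
  have s: "(SOME s. s \<in> W) \<in> W" by (rule someI_ex[OF ex])
  have r: "((SOME s. s \<in> W), (m,\<alpha>,\<beta>)) \<in> genrel (opt_reps A c c' x x) (opt_step A c c' x x)"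
    by (rule quot_rel[OF RL_quot[OF W] s t])
  have "(case (SOME s. s \<in> W) of (m,\<alpha>,\<beta>) \<Rightarrow> \<alpha> \<cdot> \<beta>) = (case (m,\<alpha>,\<beta>) of (m,\<alpha>,\<beta>) \<Rightarrow> \<alpha> \<cdot> \<beta>)"
  proof (rule genrel_fun[OF _ r])
    fix a b assume a: "a \<in> opt_reps A c c' x x" and b: "b \<in> opt_reps A c c' x x"
      and ab: "(a,b) \<in> opt_step A c c' x x"
    from ab obtain k1 k2 h \<alpha> \<beta> where e: "a = (k1, \<alpha> \<cdot> wh h x, \<beta>)" "b = (k2, \<alpha>, wh h x \<cdot> \<beta>)"
      and ty: "arM h" "dM h = k2" "cM h = k1" "arC \<alpha>" "dC \<alpha> = c" "cC \<alpha> = actO A k2 x"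
      "arC \<beta>" "dC \<beta> = actO A k1 x" "cC \<beta> = c'" by (rule opt_stepE)
    have ob: "obM k1" "obM k2" using ty Mob by auto
    show "(case a of (m,\<alpha>,\<beta>) \<Rightarrow> \<alpha> \<cdot> \<beta>) = (case b of (m,\<alpha>,\<beta>) \<Rightarrow> \<alpha> \<cdot> \<beta>)"
      unfolding e using ty ob x by (simp add: cs)
  qed
  then show ?thesis unfolding outside_def by simp
qed

end

context AC begin

lemma rel2_refl: "a \<in> opt2_reps A x y \<Longrightarrow> (a,a) \<in> opt2_rel A x y"
  using genrel_equiv[of "opt2_reps A x y" "opt2_step A x y"] unfolding opt2_rel_def equiv_def refl_on_def by blast

definition psi :: "('mo,'a,'o) rep4 \<Rightarrow> 'mo \<times> 'mo \<times> 'a \<times> 'a \<times> 'a" where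
  "psi z = (case z of (n1,f,d,g,n2,h,k) \<Rightarrow> (n1, n2, f, g \<cdot> h, k))"

lemma psi_rel:
  assumes r: "(z,z') \<in> rel4 A y x x" and y: "obC y"
  shows "(psi z, psi z') \<in> opt2_rel A x y"
  unfolding opt2_rel_def
proof (rule genrel_map[OF _ _ r[unfolded rel4_def]])
  fix a assume a: "a \<in> rep4 A y x x"
  obtain n1 f d g n2 h k where e: "a = (n1,f,d,g,n2,h,k)" by (cases a) blast
  show "psi a \<in> opt2_reps A x y" using a unfolding e psi_def rep4_iff by (simp add: opt2_reps_iff cs)
next
  fix a b assume a: "a \<in> rep4 A y x x" and b: "b \<in> rep4 A y x x" and ab: "(a,b) \<in> step4 A y"
  from ab show "(psi a, psi b) \<in> genrel (opt2_reps A x y) (opt2_step A x y)"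
  proof (cases rule: step4E)
    case (s1 m1 n1 u f d g n2 h k)
    have "((m1, n2, f \<cdot> wh u y, g \<cdot> h, k), (n1, n2, f, wh u y \<cdot> (g \<cdot> h), k)) \<in> opt2_rel A x y"
      by (rule O1) (use a b s1 y in \<open>simp_all add: rep4_iff cs\<close>)
    then show ?thesis unfolding s1(1,2) psi_def opt2_rel_def using a b y s1(3-5) unfolding s1(1,2) rep4_iff by (simp add: cs)
  next
    case (s2 n1 f d d' g p n2 h k)
    have "(psi a, psi a) \<in> opt2_rel A x y"
      by (rule rel2_refl) (use a y in \<open>simp add: s2 psi_def rep4_iff opt2_reps_iff cs\<close>)
    then show ?thesis unfolding s2(1,2) psi_def opt2_rel_def using a b y s2(3-5) unfolding s2(1,2) rep4_iff by (simp add: cs)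
  next
    case (s3 n1 f d g m2 n2 u h k)
    have "((n1, m2, f, (g \<cdot> h) \<cdot> wh u y, k), (n1, n2, f, g \<cdot> h, wh u y \<cdot> k)) \<in> opt2_rel A x y"
      by (rule O2) (use a b s3 y in \<open>simp_all add: rep4_iff cs\<close>)
    then show ?thesis unfolding s3(1,2) psi_def opt2_rel_def using a b y s3(3-5) unfolding s3(1,2) rep4_iff by (simp add: cs)
  qed
qed


lemma opt2_stepE:
  assumes "(a,b) \<in> opt2_step A x y"
  obtains (o1) m1 n1 m2 h \<alpha> \<gamma> \<beta> where "a = (m1, m2, \<alpha> \<cdot> wh h y, \<gamma>, \<beta>)" "b = (n1, m2, \<alpha>, wh h y \<cdot> \<gamma>, \<beta>)"
      "arM h" "dM h = n1" "cM h = m1"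
  | (o2) m1 m2 n2 h \<alpha> \<gamma> \<beta> where "a = (m1, m2, \<alpha>, \<gamma> \<cdot> wh h y, \<beta>)" "b = (m1, n2, \<alpha>, \<gamma>, wh h y \<cdot> \<beta>)"
      "arM h" "dM h = n2" "cM h = m2"
  using assms unfolding opt2_step_def hom_iff
  apply (simp only: Un_iff mem_Collect_eq prod.inject)
  apply (elim disjE exE conjE)
   apply metis
  apply metis
  done

definition phi :: "'mo \<Rightarrow> 'a \<Rightarrow> 'a \<Rightarrow> 'o \<Rightarrow> 'mo \<times> 'mo \<times> 'a \<times> 'a \<times> 'a \<Rightarrow> ('mo,'a,'o) rep4" where
  "phi n f g y w = (case w of (m1,m2,\<alpha>,\<gamma>,\<beta>) \<Rightarrow>
     (tenO A n m1, f \<cdot> (act n \<alpha> \<cdot> ai n m1 y), actO A (tenO A n m1) y, ii (actO A (tenO A n m1) y),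
      tenO A n m2, aa n m1 y \<cdot> (act n \<gamma> \<cdot> ai n m2 y), aa n m2 y \<cdot> (act n \<beta> \<cdot> g)))"

lemma phi_rel:
  assumes r: "(w,w') \<in> opt2_rel A x y"
    and ty: "obM n" "arC f" "dC f = c" "cC f = actO A n x" "arC g" "dC g = actO A n x" "cC g = c'"
    and x: "obC x" and y: "obC y"
  shows "(phi n f g y w, phi n f g y w') \<in> rel4 A y c c'"
  unfolding rel4_def
proof (rule genrel_map[OF _ _ r[unfolded opt2_rel_def]])
  fix a assume a: "a \<in> opt2_reps A x y"
  obtain m1 m2 \<alpha> \<gamma> \<beta> where e: "a = (m1,m2,\<alpha>,\<gamma>,\<beta>)" by (cases a) blast
  show "phi n f g y a \<in> rep4 A y c c'" using a ty x y unfolding e phi_def opt2_reps_iff by (simp add: rep4_iff cs)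
next
  fix a b assume a: "a \<in> opt2_reps A x y" and b: "b \<in> opt2_reps A x y" and ab: "(a,b) \<in> opt2_step A x y"
  from ab show "(phi n f g y a, phi n f g y b) \<in> genrel (rep4 A y c c') (step4 A y)"
  proof (cases rule: opt2_stepE)
    case (o1 m1 n1 m2 h \<alpha> \<gamma> \<beta>)
    have tt: "obM m1" "obM n1" "obM m2" "arC \<alpha>" "dC \<alpha> = x" "cC \<alpha> = actO A n1 y" "arC \<gamma>" "dC \<gamma> = actO A m1 y"
      "cC \<gamma> = actO A m2 y" "arC \<beta>" "dC \<beta> = actO A m2 y" "cC \<beta> = x"
      using a b o1(3-5) y unfolding o1(1,2) opt2_reps_iff by (simp_all add: cs)
    let ?u = "tenA A (cid (Mcat A) n) h"
    let ?F = "f \<cdot> (act n \<alpha> \<cdot> ai n n1 y)"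
    let ?D1 = "actO A (tenO A n m1) y" and ?D2 = "actO A (tenO A n n1) y"
    let ?H = "aa n m1 y \<cdot> (act n \<gamma> \<cdot> ai n m2 y)" and ?K = "aa n m2 y \<cdot> (act n \<beta> \<cdot> g)"
    have r1: "((tenO A n m1, ?F \<cdot> wh ?u y, ?D1, ii ?D1, tenO A n m2, ?H, ?K),
               (tenO A n n1, ?F, ?D1, wh ?u y \<cdot> ii ?D1, tenO A n m2, ?H, ?K)) \<in> rel4 A y c c'"
      by (rule S1) (use tt ty x y o1(3-5) in \<open>simp_all add: cs\<close>)
    have r2: "((tenO A n n1, ?F, ?D1, ii ?D2 \<cdot> wh ?u y, tenO A n m2, ?H, ?K),
               (tenO A n n1, ?F, ?D2, ii ?D2, tenO A n m2, wh ?u y \<cdot> ?H, ?K)) \<in> rel4 A y c c'"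
      by (rule S2) (use tt ty x y o1(3-5) in \<open>simp_all add: cs\<close>)
    have "(phi n f g y a, phi n f g y b) \<in> rel4 A y c c'"
      using r1 r2 tt ty x y o1(3-5) unfolding o1(1,2) phi_def
      by (simp add: cs act_comp natN1' natN2' natN1 natN2) (meson rel4_trans)
    then show ?thesis unfolding rel4_def .
  next
    case (o2 m1 m2 n2 h \<alpha> \<gamma> \<beta>)
    have tt: "obM m1" "obM n2" "obM m2" "arC \<alpha>" "dC \<alpha> = x" "cC \<alpha> = actO A m1 y" "arC \<gamma>" "dC \<gamma> = actO A m1 y"
      "cC \<gamma> = actO A n2 y" "arC \<beta>" "dC \<beta> = actO A m2 y" "cC \<beta> = x"
      using a b o2(3-5) y unfolding o2(1,2) opt2_reps_iff by (simp_all add: cs)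
    let ?u = "tenA A (cid (Mcat A) n) h"
    let ?F = "f \<cdot> (act n \<alpha> \<cdot> ai n m1 y)"
    let ?D1 = "actO A (tenO A n m1) y"
    let ?H = "aa n m1 y \<cdot> (act n \<gamma> \<cdot> ai n n2 y)" and ?K = "aa n m2 y \<cdot> (act n \<beta> \<cdot> g)"
    have r1: "((tenO A n m1, ?F, ?D1, ii ?D1, tenO A n m2, ?H \<cdot> wh ?u y, ?K),
               (tenO A n m1, ?F, ?D1, ii ?D1, tenO A n n2, ?H, wh ?u y \<cdot> ?K)) \<in> rel4 A y c c'"
      by (rule S3) (use tt ty x y o2(3-5) in \<open>simp_all add: cs\<close>)
    have "(phi n f g y a, phi n f g y b) \<in> rel4 A y c c'"
      using r1 tt ty x y o2(3-5) unfolding o2(1,2) phi_def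
      by (simp add: cs act_comp natN1' natN2' natN1 natN2)
    then show ?thesis unfolding rel4_def .
  qed
qed

end

context AC begin

lemma RL_cls: "t \<in> opt_reps A c c' x x \<Longrightarrow> cls (opt_rel A c c' x x) t \<in> RL A x c c'"
  unfolding RL_def Optic_def opt_rel_def by (rule cls_in_quot)

lemma cls_self_opt: "t \<in> opt_reps A c c' x x \<Longrightarrow> t \<in> cls (opt_rel A c c' x x) t"
  unfolding opt_rel_def by (rule cls_self)

lemma idopt_rep: "obC x \<Longrightarrow> (munit A, cinv (Ccat A) (alam A x), alam A x) \<in> opt_reps A x x x x"
  unfolding opt_reps_iff using lam_inv[of x] lam_ar[of x] by (simp add: cs)

lemma idopt_RL: "obC x \<Longrightarrow> idopt A x \<in> RL A x x x"
  unfolding idopt_def by (rule RL_cls[OF idopt_rep])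

lemma idopt_mem: "obC x \<Longrightarrow> (munit A, cinv (Ccat A) (alam A x), alam A x) \<in> idopt A x"
  unfolding idopt_def by (rule cls_self_opt[OF idopt_rep])

lemma tc_RL: "two_cell A x y \<theta> \<Longrightarrow> obC c \<Longrightarrow> obC c' \<Longrightarrow> W \<in> RL A x c c' \<Longrightarrow> \<theta> c c' W \<in> RL A y c c'"
  unfolding two_cell_def by blast

lemma tc_nat: "two_cell A x y \<theta> \<Longrightarrow> obC c \<Longrightarrow> obC c' \<Longrightarrow> obC d \<Longrightarrow> obC d' \<Longrightarrow>
   p \<in> hom (Ccat A) d c \<Longrightarrow> q \<in> hom (Ccat A) c' d' \<Longrightarrow> W \<in> RL A x c c' \<Longrightarrow>
   \<theta> d d' (rl_dimap A x d d' p q W) = rl_dimap A y d d' p q (\<theta> c c' W)"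
  unfolding two_cell_def by blast

lemma tc_str: "two_cell A x y \<theta> \<Longrightarrow> obM m \<Longrightarrow> obC c \<Longrightarrow> obC c' \<Longrightarrow> W \<in> RL A x c c' \<Longrightarrow>
   \<theta> (actO A m c) (actO A m c') (rl_str A x m c c' W) = rl_str A y m c c' (\<theta> c c' W)"
  unfolding two_cell_def by blast

lemma str_id:
  assumes x: "obC x" and n: "obM n"
  shows "rl_str A x n x x (idopt A x) = cls (opt_rel A (actO A n x) (actO A n x) x x) (n, ii (actO A n x), ii (actO A n x))"
proof -
  note li = lam_inv[OF x] and la = lam_ar[OF x] and ra = rho_ar[OF n]
  let ?X = "act n (cinv (Ccat A) (alam A x)) \<cdot> ai n (munit A) x"
  have s: "rl_str A x n x x (idopt A x) = cls (opt_rel A (actO A n x) (actO A n x) x x)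
     (tenO A n (munit A), ?X, aa n (munit A) x \<cdot> act n (alam A x))"
    by (rule str_cls[OF idopt_RL[OF x] idopt_mem[OF x] x n])
  have coh': "aa n (munit A) x \<cdot> act n (alam A x) = wh (mrho A n) x" by (rule coh[OF n x])
  have a1: "act n (cinv (Ccat A) (alam A x) \<cdot> alam A x) = act n (cinv (Ccat A) (alam A x)) \<cdot> act n (alam A x)"
    by (rule act_comp) (use n li la in \<open>simp_all\<close>)
  have a2: "act n (cinv (Ccat A) (alam A x) \<cdot> alam A x) = ii (actO A n x)"
    using li n x by (simp add: cs)
  have eqX: "?X \<cdot> wh (mrho A n) x = ii (actO A n x)"
    unfolding coh'[symmetric] using a1 a2 li la n x unitob by (simp add: cs)
  have "((n, ?X \<cdot> wh (mrho A n) x, ii (actO A n x)), (tenO A n (munit A), ?X, wh (mrho A n) x \<cdot> ii (actO A n x)))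
        \<in> opt_rel A (actO A n x) (actO A n x) x x"
    by (rule opt_stepI) (use li la ra n x unitob in \<open>simp_all add: cs\<close>)
  then have "cls (opt_rel A (actO A n x) (actO A n x) x x) (n, ?X \<cdot> wh (mrho A n) x, ii (actO A n x)) =
     cls (opt_rel A (actO A n x) (actO A n x) x x) (tenO A n (munit A), ?X, wh (mrho A n) x \<cdot> ii (actO A n x))"
    unfolding opt_rel_def by (rule cls_eq)
  then show ?thesis unfolding s coh' eqX using ra n x by (simp add: cs)
qed

lemma theta_formula:
  assumes tc: "two_cell A x y \<theta>" and th: "\<theta> x x (idopt A x) = l"
    and l: "l \<in> Optic A x x y y" and t: "(m,\<alpha>,\<beta>) \<in> l" and x: "obC x" and y: "obC y"
    and W: "W \<in> RL A x c c'" and tW: "(n,f,g) \<in> W" and c: "obC c" and c': "obC c'"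
  shows "\<theta> c c' W = cls (opt_rel A c c' y y) (tenO A n m, f \<cdot> (act n \<alpha> \<cdot> ai n m y), aa n m y \<cdot> (act n \<beta> \<cdot> g))"
proof -
  have nt: "obM n" "arC f" "dC f = c" "cC f = actO A n x" "arC g" "dC g = actO A n x" "cC g = c'"
    using RL_rep[OF W tW] unfolding opt_reps_iff by auto
  have lR: "l \<in> RL A y x x" using l unfolding Optic_RL .
  have mt: "obM m" "arC \<alpha>" "dC \<alpha> = x" "cC \<alpha> = actO A m y" "arC \<beta>" "dC \<beta> = actO A m y" "cC \<beta> = x"
    using RL_rep[OF lR t] unfolding opt_reps_iff by auto
  have nx: "obC (actO A n x)" using nt x by (simp add: cs)
  have rep1: "(n, ii (actO A n x), ii (actO A n x)) \<in> opt_reps A (actO A n x) (actO A n x) x x"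
    unfolding opt_reps_iff using nt x by (simp add: cs)
  let ?V = "rl_str A x n x x (idopt A x)"
  have V: "?V = cls (opt_rel A (actO A n x) (actO A n x) x x) (n, ii (actO A n x), ii (actO A n x))"
    by (rule str_id[OF x nt(1)])
  have VR: "?V \<in> RL A x (actO A n x) (actO A n x)" unfolding V by (rule RL_cls[OF rep1])
  have Vm: "(n, ii (actO A n x), ii (actO A n x)) \<in> ?V" unfolding V by (rule cls_self_opt[OF rep1])
  have WV: "W = rl_dimap A x c c' f g ?V"
  proof -
    have "rl_dimap A x c c' f g ?V = cls (opt_rel A c c' x x) (n, f \<cdot> ii (actO A n x), ii (actO A n x) \<cdot> g)"
      by (rule dimap_cls[OF VR Vm x]) (use nt in auto)
    also have "\<dots> = cls (opt_rel A c c' x x) (n, f, g)" using nt x by (simp add: cs)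
    also have "\<dots> = W" unfolding opt_rel_def by (rule quot_cls[OF RL_quot[OF W] tW, symmetric])
    finally show ?thesis by simp
  qed
  have s1: "\<theta> c c' W = rl_dimap A y c c' f g (\<theta> (actO A n x) (actO A n x) ?V)"
    unfolding WV by (rule tc_nat[OF tc nx nx c c' _ _ VR]) (use nt in \<open>auto simp: hom_iff\<close>)
  have s2: "\<theta> (actO A n x) (actO A n x) ?V = rl_str A y n x x l"
    using tc_str[OF tc nt(1) x x idopt_RL[OF x]] th by simp
  have s3: "rl_str A y n x x l = cls (opt_rel A (actO A n x) (actO A n x) y y)
     (tenO A n m, act n \<alpha> \<cdot> ai n m y, aa n m y \<cdot> act n \<beta>)"
    by (rule str_cls[OF lR t y nt(1)])
  have rep2: "(tenO A n m, act n \<alpha> \<cdot> ai n m y, aa n m y \<cdot> act n \<beta>) \<in> opt_reps A (actO A n x) (actO A n x) y y"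
    unfolding opt_reps_iff using nt mt x y by (simp add: cs)
  have s4: "rl_dimap A y c c' f g (cls (opt_rel A (actO A n x) (actO A n x) y y)
     (tenO A n m, act n \<alpha> \<cdot> ai n m y, aa n m y \<cdot> act n \<beta>)) =
     cls (opt_rel A c c' y y) (tenO A n m, f \<cdot> (act n \<alpha> \<cdot> ai n m y), (aa n m y \<cdot> act n \<beta>) \<cdot> g)"
    by (rule dimap_cls[OF RL_cls[OF rep2] cls_self_opt[OF rep2] y]) (use nt in auto)
  show ?thesis unfolding s1 s2 s3 s4 using nt mt x y by (simp add: cs)
qed

end

context AC begin

lemma Gamma_val:
  assumes tc: "two_cell A x y \<theta>" and th: "\<theta> x x (idopt A x) = l"
    and l: "l \<in> Optic A x x y y" and t: "(m,\<alpha>,\<beta>) \<in> l" and x: "obC x" and y: "obC y"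
    and c: "obC c" and c': "obC c'" and z: "(n1,f1,d,g1,n2,h1,k1) \<in> rep4 A x c c'"
  shows "glue A y c d c' (\<theta> c d (cls (opt_rel A c d x x) (n1,f1,g1))) (\<theta> d c' (cls (opt_rel A d c' x x) (n2,h1,k1)))
    = cls (rel4 A y c c') (tenO A n1 m, f1 \<cdot> (act n1 \<alpha> \<cdot> ai n1 m y), d, aa n1 m y \<cdot> (act n1 \<beta> \<cdot> g1),
                          tenO A n2 m, h1 \<cdot> (act n2 \<alpha> \<cdot> ai n2 m y), aa n2 m y \<cdot> (act n2 \<beta> \<cdot> k1))"
proof -
  have zt: "obM n1" "arC f1" "dC f1 = c" "cC f1 = actO A n1 x" "obC d" "arC g1" "dC g1 = actO A n1 x" "cC g1 = d"
    "obM n2" "arC h1" "dC h1 = d" "cC h1 = actO A n2 x" "arC k1" "dC k1 = actO A n2 x" "cC k1 = c'"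
    using z unfolding rep4_iff by auto
  have lR: "l \<in> RL A y x x" using l unfolding Optic_RL .
  have mt: "obM m" "arC \<alpha>" "dC \<alpha> = x" "cC \<alpha> = actO A m y" "arC \<beta>" "dC \<beta> = actO A m y" "cC \<beta> = x"
    using RL_rep[OF lR t] unfolding opt_reps_iff by auto
  have r1: "(n1,f1,g1) \<in> opt_reps A c d x x" unfolding opt_reps_iff using zt by simp
  have r2: "(n2,h1,k1) \<in> opt_reps A d c' x x" unfolding opt_reps_iff using zt by simp
  have e1: "\<theta> c d (cls (opt_rel A c d x x) (n1,f1,g1)) = cls (opt_rel A c d y y) (tenO A n1 m, f1 \<cdot> (act n1 \<alpha> \<cdot> ai n1 m y), aa n1 m y \<cdot> (act n1 \<beta> \<cdot> g1))"
    by (rule theta_formula[OF tc th l t x y RL_cls[OF r1] cls_self_opt[OF r1] c zt(5)])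
  have e2: "\<theta> d c' (cls (opt_rel A d c' x x) (n2,h1,k1)) = cls (opt_rel A d c' y y) (tenO A n2 m, h1 \<cdot> (act n2 \<alpha> \<cdot> ai n2 m y), aa n2 m y \<cdot> (act n2 \<beta> \<cdot> k1))"
    by (rule theta_formula[OF tc th l t x y RL_cls[OF r2] cls_self_opt[OF r2] zt(5) c'])
  have q1: "(tenO A n1 m, f1 \<cdot> (act n1 \<alpha> \<cdot> ai n1 m y), aa n1 m y \<cdot> (act n1 \<beta> \<cdot> g1)) \<in> opt_reps A c d y y"
    unfolding opt_reps_iff using zt mt x y by (simp add: cs)
  have q2: "(tenO A n2 m, h1 \<cdot> (act n2 \<alpha> \<cdot> ai n2 m y), aa n2 m y \<cdot> (act n2 \<beta> \<cdot> k1)) \<in> opt_reps A d c' y y"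
    unfolding opt_reps_iff using zt mt x y by (simp add: cs)
  show ?thesis unfolding e1 e2
    by (rule glue_cls[OF RL_cls[OF q1] RL_cls[OF q2] cls_self_opt[OF q1] cls_self_opt[OF q2] y zt(5)])
qed


lemma dir2:
  assumes tc: "two_cell A x y \<theta>" and th: "\<theta> x x (idopt A x) = l"
    and l: "l \<in> Optic A x x y y" and x: "obC x" and y: "obC y"
    and out: "outside A l = ii x" and ot: "once A x y l = twice A x y l"
    and c: "obC c" and c': "obC c'" and W: "W \<in> RL A x c c'"
  shows "outside A (\<theta> c c' W) = outside A W \<and> dbl A y c c' (\<theta> c c' W) = hcomp2 A x y \<theta> c c' (dbl A x c c' W)"
proof -
  have lR: "l \<in> RL A y x x" using l unfolding Optic_RL .
  obtain t where "t \<in> l" using quot_ne[OF RL_quot[OF lR]] by blast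
  then obtain m \<alpha> \<beta> where t: "(m,\<alpha>,\<beta>) \<in> l" by (cases t) blast
  obtain s where "s \<in> W" using quot_ne[OF RL_quot[OF W]] by blast
  then obtain n f g where tW: "(n,f,g) \<in> W" by (cases s) blast
  have nt: "obM n" "arC f" "dC f = c" "cC f = actO A n x" "arC g" "dC g = actO A n x" "cC g = c'"
    using RL_rep[OF W tW] unfolding opt_reps_iff by auto
  have mt: "obM m" "arC \<alpha>" "dC \<alpha> = x" "cC \<alpha> = actO A m y" "arC \<beta>" "dC \<beta> = actO A m y" "cC \<beta> = x"
    using RL_rep[OF lR t] unfolding opt_reps_iff by auto
  have ab: "\<alpha> \<cdot> \<beta> = ii x" using outside_eq[OF lR t y] out by simp
  let ?F = "f \<cdot> (act n \<alpha> \<cdot> ai n m y)" and ?G = "aa n m y \<cdot> (act n \<beta> \<cdot> g)"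
  have thW: "\<theta> c c' W = cls (opt_rel A c c' y y) (tenO A n m, ?F, ?G)"
    by (rule theta_formula[OF tc th l t x y W tW c c'])
  have repT: "(tenO A n m, ?F, ?G) \<in> opt_reps A c c' y y"
    unfolding opt_reps_iff using nt mt x y by (simp add: cs)
  have part1: "outside A (\<theta> c c' W) = outside A W"
  proof -
    have a1: "act n (\<alpha> \<cdot> \<beta>) = act n \<alpha> \<cdot> act n \<beta>" by (rule act_comp) (use nt mt in simp_all)
    have a2: "act n \<alpha> \<cdot> act n \<beta> = ii (actO A n x)" using a1 ab nt x by (simp add: cs)
    have k: "act n \<alpha> \<cdot> (act n \<beta> \<cdot> g) = g"
      using Cassoc[of "act n \<alpha>" "act n \<beta>" g] a2 nt mt x y by (simp add: cs)
    have "outside A (\<theta> c c' W) = ?F \<cdot> ?G"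
      unfolding thW by (rule outside_eq[OF RL_cls[OF repT] cls_self_opt[OF repT] y])
    also have "\<dots> = f \<cdot> (act n \<alpha> \<cdot> (act n \<beta> \<cdot> g))" using nt mt x y by (simp add: cs)
    also have "\<dots> = f \<cdot> g" using k by simp
    also have "\<dots> = outside A W" by (rule outside_eq[OF W tW x, symmetric])
    finally show ?thesis .
  qed
  let ?L = "(tenO A n m, ?F, actO A (tenO A n m) y, ii (actO A (tenO A n m) y), tenO A n m, ii (actO A (tenO A n m) y), ?G)"
  have LHS: "dbl A y c c' (\<theta> c c' W) = cls (rel4 A y c c') ?L"
    unfolding thW using dbl_cls[OF RL_cls[OF repT] cls_self_opt[OF repT] y] .
  let ?z0 = "(n, f, actO A n x, ii (actO A n x), n, ii (actO A n x), g)"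
  have Z: "dbl A x c c' W = cls (rel4 A x c c') ?z0" by (rule dbl_cls[OF W tW x])
  have z0: "?z0 \<in> rep4 A x c c'" unfolding rep4_iff using nt x by (simp add: cs)
  have Zq: "cls (rel4 A x c c') ?z0 \<in> rep4 A x c c' // genrel (rep4 A x c c') (step4 A x)"
    unfolding rel4_def by (rule cls_in_quot[OF z0])
  have z0m: "?z0 \<in> cls (rel4 A x c c') ?z0" unfolding rel4_def by (rule cls_self[OF z0])
  define Gm where "Gm = (\<lambda>(n1,f,d,g,n2,h,k). glue A y c d c' (\<theta> c d (cls (opt_rel A c d x x) (n1,f,g)))
                      (\<theta> d c' (cls (opt_rel A d c' x x) (n2,h,k))))"
  have hc: "hcomp2 A x y \<theta> c c' (dbl A x c c' W) = (\<Union>z\<in>cls (rel4 A x c c') ?z0. Gm z)"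
    unfolding hcomp2_def Gm_def Z ..
  have UN: "(\<Union>z\<in>cls (rel4 A x c c') ?z0. Gm z) = Gm ?z0"
  proof (rule UN_cls[OF Zq z0m])
    fix a b assume a: "a \<in> rep4 A x c c'" and b: "b \<in> rep4 A x c c'" and st: "(a,b) \<in> step4 A x"
    from st show "Gm a = Gm b"
    proof (cases rule: step4E)
      case (s1 m1 n1 u f d g n2 h k)
      have tt: "obM m1" "obM n1" "arC f" "dC f = c" "cC f = actO A n1 x" "obC d" "arC g" "dC g = actO A m1 x" "cC g = d"
        using a b s1(3-5) x unfolding s1(1,2) rep4_iff by (simp_all add: cs)
      have "((m1, f \<cdot> wh u x, g), (n1, f, wh u x \<cdot> g)) \<in> opt_rel A c d x x"
        by (rule opt_stepI) (use tt s1(3-5) x in simp_all)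
      then have "cls (opt_rel A c d x x) (m1, f \<cdot> wh u x, g) = cls (opt_rel A c d x x) (n1, f, wh u x \<cdot> g)"
        unfolding opt_rel_def by (rule cls_eq)
      then show ?thesis unfolding s1(1,2) Gm_def by simp
    next
      case (s3 n1 f d g m2 n2 u h k)
      have tt: "obM m2" "obM n2" "arC k" "dC k = actO A m2 x" "cC k = c'" "obC d" "arC h" "dC h = d" "cC h = actO A n2 x"
        using a b s3(3-5) x unfolding s3(1,2) rep4_iff by (simp_all add: cs)
      have "((m2, h \<cdot> wh u x, k), (n2, h, wh u x \<cdot> k)) \<in> opt_rel A d c' x x"
        by (rule opt_stepI) (use tt s3(3-5) x in simp_all)
      then have "cls (opt_rel A d c' x x) (m2, h \<cdot> wh u x, k) = cls (opt_rel A d c' x x) (n2, h, wh u x \<cdot> k)"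
        unfolding opt_rel_def by (rule cls_eq)
      then show ?thesis unfolding s3(1,2) Gm_def by simp
    next
      case (s2 n1 f d d' g p n2 h k)
      have tt: "obM n1" "arC f" "dC f = c" "cC f = actO A n1 x" "obC d" "obC d'" "arC g" "dC g = actO A n1 x" "cC g = d"
        "obM n2" "arC h" "dC h = d'" "cC h = actO A n2 x" "arC k" "dC k = actO A n2 x" "cC k = c'"
        using a b s2(3-5) x unfolding s2(1,2) rep4_iff by (simp_all add: cs)
      have ga: "Gm a = cls (rel4 A y c c') (tenO A n1 m, f \<cdot> (act n1 \<alpha> \<cdot> ai n1 m y), d', aa n1 m y \<cdot> (act n1 \<beta> \<cdot> (g \<cdot> p)),
                          tenO A n2 m, h \<cdot> (act n2 \<alpha> \<cdot> ai n2 m y), aa n2 m y \<cdot> (act n2 \<beta> \<cdot> k))"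
        unfolding Gm_def s2(1) using Gamma_val[OF tc th l t x y c c' a[unfolded s2(1)]] by simp
      have gb: "Gm b = cls (rel4 A y c c') (tenO A n1 m, f \<cdot> (act n1 \<alpha> \<cdot> ai n1 m y), d, aa n1 m y \<cdot> (act n1 \<beta> \<cdot> g),
                          tenO A n2 m, (p \<cdot> h) \<cdot> (act n2 \<alpha> \<cdot> ai n2 m y), aa n2 m y \<cdot> (act n2 \<beta> \<cdot> k))"
        unfolding Gm_def s2(2) using Gamma_val[OF tc th l t x y c c' b[unfolded s2(2)]] by simp
      have "((tenO A n1 m, f \<cdot> (act n1 \<alpha> \<cdot> ai n1 m y), d', (aa n1 m y \<cdot> (act n1 \<beta> \<cdot> g)) \<cdot> p,
                          tenO A n2 m, h \<cdot> (act n2 \<alpha> \<cdot> ai n2 m y), aa n2 m y \<cdot> (act n2 \<beta> \<cdot> k)),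
             (tenO A n1 m, f \<cdot> (act n1 \<alpha> \<cdot> ai n1 m y), d, aa n1 m y \<cdot> (act n1 \<beta> \<cdot> g),
                          tenO A n2 m, p \<cdot> (h \<cdot> (act n2 \<alpha> \<cdot> ai n2 m y)), aa n2 m y \<cdot> (act n2 \<beta> \<cdot> k))) \<in> rel4 A y c c'"
        by (rule S2) (use tt mt s2(3-5) x y in \<open>simp_all add: cs\<close>)
      then have "(cls (rel4 A y c c') (tenO A n1 m, f \<cdot> (act n1 \<alpha> \<cdot> ai n1 m y), d', (aa n1 m y \<cdot> (act n1 \<beta> \<cdot> g)) \<cdot> p,
                          tenO A n2 m, h \<cdot> (act n2 \<alpha> \<cdot> ai n2 m y), aa n2 m y \<cdot> (act n2 \<beta> \<cdot> k))) =
             cls (rel4 A y c c') (tenO A n1 m, f \<cdot> (act n1 \<alpha> \<cdot> ai n1 m y), d, aa n1 m y \<cdot> (act n1 \<beta> \<cdot> g),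
                          tenO A n2 m, p \<cdot> (h \<cdot> (act n2 \<alpha> \<cdot> ai n2 m y)), aa n2 m y \<cdot> (act n2 \<beta> \<cdot> k))"
        unfolding rel4_def by (rule cls_eq)
      then show ?thesis unfolding ga gb using tt mt s2(3-5) x y by (simp add: cs)
    qed
  qed
  have G0: "Gm ?z0 = cls (rel4 A y c c') (tenO A n m, f \<cdot> (act n \<alpha> \<cdot> ai n m y), actO A n x, aa n m y \<cdot> (act n \<beta> \<cdot> ii (actO A n x)),
                          tenO A n m, ii (actO A n x) \<cdot> (act n \<alpha> \<cdot> ai n m y), aa n m y \<cdot> (act n \<beta> \<cdot> g))"
    unfolding Gm_def using Gamma_val[OF tc th l t x y c c' z0] by simp
  let ?w1 = "(m, m, \<alpha>, ii (actO A m y), \<beta>)" and ?w2 = "(m, m, \<alpha>, \<beta> \<cdot> \<alpha>, \<beta>)"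
  have w1: "?w1 \<in> opt2_reps A x y" unfolding opt2_reps_iff using mt y by (simp add: cs)
  have w2: "?w2 \<in> opt2_reps A x y" unfolding opt2_reps_iff using mt y by (simp add: cs)
  have "cls (opt2_rel A x y) ?w1 = cls (opt2_rel A x y) ?w2"
    using ot once_cls[OF l t y] twice_cls[OF l t y] by simp
  then have w12: "(?w1, ?w2) \<in> opt2_rel A x y" unfolding opt2_rel_def by (rule cls_eqD[OF _ w1 w2])
  have p12: "(phi n f g y ?w1, phi n f g y ?w2) \<in> rel4 A y c c'"
    by (rule phi_rel[OF w12 nt x y])
  have a1: "act n (\<beta> \<cdot> \<alpha>) = act n \<beta> \<cdot> act n \<alpha>" by (rule act_comp) (use nt mt in simp_all)
  have q1: "(?L, (tenO A n m, ?F, actO A (tenO A n m) y, ii (actO A (tenO A n m) y), tenO A n m,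
             aa n m y \<cdot> (act n \<beta> \<cdot> (act n \<alpha> \<cdot> ai n m y)), ?G)) \<in> rel4 A y c c'"
    using p12 a1 nt mt x y unfolding phi_def by (simp add: cs)
  have q2: "((tenO A n m, ?F, actO A n x, ii (actO A (tenO A n m) y) \<cdot> (aa n m y \<cdot> act n \<beta>), tenO A n m, act n \<alpha> \<cdot> ai n m y, ?G),
             (tenO A n m, ?F, actO A (tenO A n m) y, ii (actO A (tenO A n m) y), tenO A n m,
             (aa n m y \<cdot> act n \<beta>) \<cdot> (act n \<alpha> \<cdot> ai n m y), ?G)) \<in> rel4 A y c c'"
    by (rule S2) (use nt mt x y in \<open>simp_all add: cs\<close>)
  have q3: "((tenO A n m, f \<cdot> (act n \<alpha> \<cdot> ai n m y), actO A n x, aa n m y \<cdot> (act n \<beta> \<cdot> ii (actO A n x)),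
                          tenO A n m, ii (actO A n x) \<cdot> (act n \<alpha> \<cdot> ai n m y), aa n m y \<cdot> (act n \<beta> \<cdot> g)), ?L) \<in> rel4 A y c c'"
    using q1 q2 nt mt x y by (simp add: cs) (meson rel4_sym rel4_trans)
  have part2: "dbl A y c c' (\<theta> c c' W) = hcomp2 A x y \<theta> c c' (dbl A x c c' W)"
    unfolding LHS hc UN G0 using q3 unfolding rel4_def by (rule cls_eq[symmetric])
  show ?thesis using part1 part2 by blast
qed


lemma dir1:
  assumes tc: "two_cell A x y \<theta>" and th: "\<theta> x x (idopt A x) = l"
    and l: "l \<in> Optic A x x y y" and x: "obC x" and y: "obC y"
    and P1: "\<forall>c\<in>cOb (Ccat A). \<forall>c'\<in>cOb (Ccat A). \<forall>W\<in>RL A x c c'. outside A (\<theta> c c' W) = outside A W"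
    and P2: "\<forall>c\<in>cOb (Ccat A). \<forall>c'\<in>cOb (Ccat A). \<forall>W\<in>RL A x c c'.
              dbl A y c c' (\<theta> c c' W) = hcomp2 A x y \<theta> c c' (dbl A x c c' W)"
  shows "outside A l = ii x \<and> once A x y l = twice A x y l"
proof -
  have lR: "l \<in> RL A y x x" using l unfolding Optic_RL .
  obtain t where "t \<in> l" using quot_ne[OF RL_quot[OF lR]] by blast
  then obtain m \<alpha> \<beta> where t: "(m,\<alpha>,\<beta>) \<in> l" by (cases t) blast
  have mt: "obM m" "arC \<alpha>" "dC \<alpha> = x" "cC \<alpha> = actO A m y" "arC \<beta>" "dC \<beta> = actO A m y" "cC \<beta> = x"
    using RL_rep[OF lR t] unfolding opt_reps_iff by auto
  note li = lam_inv[OF x] and la = lam_ar[OF x] and iR = idopt_RL[OF x] and im = idopt_mem[OF x]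
  let ?lam = "alam A x" and ?li = "cinv (Ccat A) (alam A x)" and ?I = "munit A"
  let ?Ix = "actO A (munit A) x"
  have Ix: "obC ?Ix" using x unitob by (simp add: cs)
  have part1: "outside A l = ii x"
  proof -
    have "outside A l = outside A (\<theta> x x (idopt A x))" using th by simp
    also have "\<dots> = outside A (idopt A x)" using P1 x iR by blast
    also have "\<dots> = ?li \<cdot> ?lam" by (rule outside_eq[OF iR im x])
    also have "\<dots> = ii x" using li by simp
    finally show ?thesis .
  qed
  let ?zL = "(m, \<alpha>, actO A m y, ii (actO A m y), m, ii (actO A m y), \<beta>)"
  have LHS: "dbl A y x x l = cls (rel4 A y x x) ?zL" by (rule dbl_cls[OF lR t y])
  have P2x: "dbl A y x x l = hcomp2 A x y \<theta> x x (dbl A x x x (idopt A x))" using P2 x iR th by blast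
  let ?z0 = "(?I, ?li, ?Ix, ii ?Ix, ?I, ii ?Ix, ?lam)"
  have Z: "dbl A x x x (idopt A x) = cls (rel4 A x x x) ?z0" using dbl_cls[OF iR im x] by simp
  have z0: "?z0 \<in> rep4 A x x x" unfolding rep4_iff using x li la unitob by (simp add: cs)
  have z0m: "?z0 \<in> cls (rel4 A x x x) ?z0" unfolding rel4_def by (rule cls_self[OF z0])
  define Gm where "Gm = (\<lambda>(n1,f,d,g,n2,h,k). glue A y x d x (\<theta> x d (cls (opt_rel A x d x x) (n1,f,g)))
                      (\<theta> d x (cls (opt_rel A d x x x) (n2,h,k))))"
  have hc: "hcomp2 A x y \<theta> x x (dbl A x x x (idopt A x)) = (\<Union>z\<in>cls (rel4 A x x x) ?z0. Gm z)"
    unfolding hcomp2_def Gm_def Z ..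
  have sub: "Gm ?z0 \<subseteq> dbl A y x x l" unfolding P2x hc by (rule UN_upper[OF z0m])
  have hx: "ii x \<in> hom (Ccat A) x x" using x by (simp add: hom_iff cs)
  have hli: "?li \<in> hom (Ccat A) x ?Ix" using li by (simp add: hom_iff)
  have hla: "?lam \<in> hom (Ccat A) ?Ix x" using la by (simp add: hom_iff)
  have d1: "rl_dimap A x x ?Ix (ii x) ?li (idopt A x) = cls (opt_rel A x ?Ix x x) (?I, ?li, ii ?Ix)"
    using dimap_cls[OF iR im x, of "ii x" x ?li ?Ix] li la x by (simp add: cs)
  have d2: "rl_dimap A x ?Ix x ?lam (ii x) (idopt A x) = cls (opt_rel A ?Ix x x x) (?I, ii ?Ix, ?lam)"
    using dimap_cls[OF iR im x, of ?lam ?Ix "ii x" x] li la x by (simp add: cs)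
  have e1: "\<theta> x ?Ix (cls (opt_rel A x ?Ix x x) (?I, ?li, ii ?Ix)) = cls (opt_rel A x ?Ix y y) (m, \<alpha>, \<beta> \<cdot> ?li)"
  proof -
    have "\<theta> x ?Ix (cls (opt_rel A x ?Ix x x) (?I, ?li, ii ?Ix)) = rl_dimap A y x ?Ix (ii x) ?li (\<theta> x x (idopt A x))"
      unfolding d1[symmetric] by (rule tc_nat[OF tc x x x Ix hx hli iR])
    also have "\<dots> = cls (opt_rel A x ?Ix y y) (m, ii x \<cdot> \<alpha>, \<beta> \<cdot> ?li)"
      unfolding th by (rule dimap_cls[OF lR t y]) (use li x in \<open>simp_all add: cs\<close>)
    finally show ?thesis using mt by (simp add: cs)
  qed
  have e2: "\<theta> ?Ix x (cls (opt_rel A ?Ix x x x) (?I, ii ?Ix, ?lam)) = cls (opt_rel A ?Ix x y y) (m, ?lam \<cdot> \<alpha>, \<beta>)"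
  proof -
    have "\<theta> ?Ix x (cls (opt_rel A ?Ix x x x) (?I, ii ?Ix, ?lam)) = rl_dimap A y ?Ix x ?lam (ii x) (\<theta> x x (idopt A x))"
      unfolding d2[symmetric] by (rule tc_nat[OF tc x x Ix x hla hx iR])
    also have "\<dots> = cls (opt_rel A ?Ix x y y) (m, ?lam \<cdot> \<alpha>, \<beta> \<cdot> ii x)"
      unfolding th by (rule dimap_cls[OF lR t y]) (use la x in \<open>simp_all add: cs\<close>)
    finally show ?thesis using mt by (simp add: cs)
  qed
  have q1: "(m, \<alpha>, \<beta> \<cdot> ?li) \<in> opt_reps A x ?Ix y y" unfolding opt_reps_iff using mt li by (simp add: cs)
  have q2: "(m, ?lam \<cdot> \<alpha>, \<beta>) \<in> opt_reps A ?Ix x y y" unfolding opt_reps_iff using mt la by (simp add: cs)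
  let ?z1 = "(m, \<alpha>, ?Ix, \<beta> \<cdot> ?li, m, ?lam \<cdot> \<alpha>, \<beta>)"
  have G0: "Gm ?z0 = cls (rel4 A y x x) ?z1"
    unfolding Gm_def using e1 e2 glue_cls[OF RL_cls[OF q1] RL_cls[OF q2] cls_self_opt[OF q1] cls_self_opt[OF q2] y Ix]
    by simp
  have z1: "?z1 \<in> rep4 A y x x" unfolding rep4_iff using mt li la Ix by (simp add: cs)
  have z1m: "?z1 \<in> cls (rel4 A y x x) ?z1" unfolding rel4_def by (rule cls_self[OF z1])
  have "?z1 \<in> cls (rel4 A y x x) ?zL" using sub z1m unfolding G0 LHS by blast
  then have r1: "(?zL, ?z1) \<in> rel4 A y x x" unfolding cls_def by simp
  have r2: "(?z1, (m, \<alpha>, x, \<beta>, m, ?li \<cdot> (?lam \<cdot> \<alpha>), \<beta>)) \<in> rel4 A y x x"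
    by (rule S2) (use mt li la x y in \<open>simp_all add: cs\<close>)
  have r3: "(?zL, (m, \<alpha>, x, \<beta>, m, \<alpha>, \<beta>)) \<in> rel4 A y x x"
    using rel4_trans[OF r1 r2] mt x lam_inv2(1)[OF x, of \<alpha>] by simp
  have p: "((m, m, \<alpha>, ii (actO A m y), \<beta>), (m, m, \<alpha>, \<beta> \<cdot> \<alpha>, \<beta>)) \<in> opt2_rel A x y"
    using psi_rel[OF r3 y] mt y unfolding psi_def by (simp add: cs)
  have part2: "once A x y l = twice A x y l"
    unfolding once_cls[OF l t y] twice_cls[OF l t y] using p unfolding opt2_rel_def by (rule cls_eq)
  show ?thesis using part1 part2 by blast
qed

lemma main_AC:
  assumes "x \<in> cOb (Ccat A)" and "y \<in> cOb (Ccat A)"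
    and "l \<in> Optic A x x y y"
    and "two_cell A x y \<theta>"
    and "\<theta> x x (idopt A x) = l"
  shows "((\<forall>c\<in>cOb (Ccat A). \<forall>c'\<in>cOb (Ccat A). \<forall>W\<in>RL A x c c'.
              outside A (\<theta> c c' W) = outside A W) \<and>
          (\<forall>c\<in>cOb (Ccat A). \<forall>c'\<in>cOb (Ccat A). \<forall>W\<in>RL A x c c'.
              dbl A y c c' (\<theta> c c' W) = hcomp2 A x y \<theta> c c' (dbl A x c c' W)))
     \<longleftrightarrow> (outside A l = cid (Ccat A) x \<and> once A x y l = twice A x y l)"
proof
  assume h: "(\<forall>c\<in>cOb (Ccat A). \<forall>c'\<in>cOb (Ccat A). \<forall>W\<in>RL A x c c'.
              outside A (\<theta> c c' W) = outside A W) \<and>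
          (\<forall>c\<in>cOb (Ccat A). \<forall>c'\<in>cOb (Ccat A). \<forall>W\<in>RL A x c c'.
              dbl A y c c' (\<theta> c c' W) = hcomp2 A x y \<theta> c c' (dbl A x c c' W))"
  show "outside A l = cid (Ccat A) x \<and> once A x y l = twice A x y l"
    using dir1[OF assms(4,5,3,1,2)] h by blast
next
  assume h: "outside A l = cid (Ccat A) x \<and> once A x y l = twice A x y l"
  show "(\<forall>c\<in>cOb (Ccat A). \<forall>c'\<in>cOb (Ccat A). \<forall>W\<in>RL A x c c'.
              outside A (\<theta> c c' W) = outside A W) \<and>
          (\<forall>c\<in>cOb (Ccat A). \<forall>c'\<in>cOb (Ccat A). \<forall>W\<in>RL A x c c'.
              dbl A y c c' (\<theta> c c' W) = hcomp2 A x y \<theta> c c' (dbl A x c c' W))"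
    using dir2[OF assms(4,5,3,1,2)] h by blast
qed

end

theorem mainTheorem9:
  fixes A :: "('mo,'m,'o,'a) actg"
    and x y :: 'o
    and l :: "('mo \<times> 'a \<times> 'a) set"
    and \<theta> :: "'o \<Rightarrow> 'o \<Rightarrow> ('mo \<times> 'a \<times> 'a) set \<Rightarrow> ('mo \<times> 'a \<times> 'a) set"
  assumes "actegory A"
    and "x \<in> cOb (Ccat A)" and "y \<in> cOb (Ccat A)"
    and "l \<in> Optic A x x y y"
    and "two_cell A x y \<theta>"
    and "\<theta> x x (idopt A x) = l"
  shows "((\<forall>c\<in>cOb (Ccat A). \<forall>c'\<in>cOb (Ccat A). \<forall>W\<in>RL A x c c'.
              outside A (\<theta> c c' W) = outside A W) \<and>
          (\<forall>c\<in>cOb (Ccat A). \<forall>c'\<in>cOb (Ccat A). \<forall>W\<in>RL A x c c'.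
              dbl A y c c' (\<theta> c c' W) = hcomp2 A x y \<theta> c c' (dbl A x c c' W)))
     \<longleftrightarrow> (outside A l = cid (Ccat A) x \<and> once A x y l = twice A x y l)"
proof -
  interpret AC A by (rule AC.intro[OF assms(1)])
  show ?thesis by (rule main_AC[OF assms(2-6)])
qed

end
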